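(* Let $K$ be a closed subset of $G$ with $P(K)=\emptyset$. Then for all $f\in\mathcal{L}(\mathcal{X}_K)$ and $h\in\mathcal{L}(\mathcal{X}_{N'(K)})$: $$\underline{E}^{\mathrm{irr}}_G\big(h(X_{N'(K)})+f(X_K)\big)=\underline{E}^{\mathrm{irr}}_{N'(K)}\big(h(X_{N'(K)})\big)+\underline{E}^{\mathrm{irr}}_K\big(f(X_K)\big).$$
   Context: Setting: $G$ is a finite set of nodes forming a DAG; node $s$ carries a variable $X_s$ with finite nonempty state space $\mathcal{X}_s$; $\mathcal{X}_S=\times_{s\in S}\mathcal{X}_s$; $\mathcal{L}(\mathcal{X}_S)$: real-valued functions on $\mathcal{X}_S$. $P(s)$: parents; $s\sqsubseteq v$: directed path (possibly trivial) from $s$ to $v$; $s\sqsubset v$: additionally $s\neq v$; $D(s)=\{v:s\sqsubset v\}$; $N(s)=G\setminus(\{s\}\cup D(s))$. For $K\subseteq G$: $P(K)=(\bigcup_{s\in K}P(s))\setminus K$, $D(K)=(\bigcup_{s\in K}D(s))\setminus K$, $N(K)=G\setminus(K\cup D(K))$, $N'(K)=N(K)\setminus P(K)$; $K$ closed if $s\sqsubseteq k\sqsubseteq t$, $s,t\in K$ implies $k\in K$. Local models: nonempty closed convex sets $\mathcal{M}_{s\mid x_{P(s)}}$ of probability mass functions on $\mathcal{X}_s$. Full conditional probability measure: $(A,B)\mapsto P(A\mid B)$ ($B\ne\emptyset$), (F1) $P(\cdot\mid B)$ a probability measure with $P(B\mid B)=1$; (F2) $P(A\cap C\mid B)=P(A\mid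 C\cap B)P(C\mid B)$ if $C\cap B\ne\emptyset$. Irrelevant natural extension $\mathcal{F}^{\mathrm{irr}}_G$: all full conditional probability measures $P$ on $\mathcal{X}_G$ with $P(X_s\mid x_{N(s)})\in\mathcal{M}_{s\mid x_{P(s)}}$ for all $s,x_{N(s)}$; $\underline{E}^{\mathrm{irr}}_G(f)=\inf\{\sum_{z_G}f(z_G)P(z_G):P\in\mathcal{F}^{\mathrm{irr}}_G\}$. Sub-network: for $K\subseteq G$ with $P(K)=\emptyset$, the credal network on the DAG restricted to $K$ with the same local credal sets; $\underline{E}^{\mathrm{irr}}_K$ is the lower expectation of its irrelevant natural extension (likewise $\underline{E}^{\mathrm{irr}}_{N'(K)}$). *)

theory Defs
  imports "HOL-Analysis.Analysis"
begin

text \<open>The state space of node s is X s; a joint state on S is an element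
of PiE S X (extensional functions).\<close>

definition edges :: "'n set \<Rightarrow> ('n \<Rightarrow> 'n set) \<Rightarrow> ('n \<times> 'n) set" where
  "edges S par = {(p, s). s \<in> S \<and> p \<in> S \<and> p \<in> par s}"

definition desc :: "'n set \<Rightarrow> ('n \<Rightarrow> 'n set) \<Rightarrow> 'n \<Rightarrow> 'n set" where
  "desc S par s = {v. (s, v) \<in> (edges S par)\<^sup>+}"

definition nondesc :: "'n set \<Rightarrow> ('n \<Rightarrow> 'n set) \<Rightarrow> 'n \<Rightarrow> 'n set" where
  "nondesc S par s = S - ({s} \<union> desc S par s)"

definition parents_set :: "('n \<Rightarrow> 'n set) \<Rightarrow> 'n set \<Rightarrow> 'n set" where
  "parents_set par K = (\<Union>s\<in>K. par s) - K"

definition desc_set :: "'n set \<Rightarrow> ('n \<Rightarrow> 'n set) \<Rightarrow> 'n set \<Rightarrow> 'n set" where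
  "desc_set G par K = (\<Union>s\<in>K. desc G par s) - K"

definition nondesc_set :: "'n set \<Rightarrow> ('n \<Rightarrow> 'n set) \<Rightarrow> 'n set \<Rightarrow> 'n set" where
  "nondesc_set G par K = G - (K \<union> desc_set G par K)"

definition nondesc'_set :: "'n set \<Rightarrow> ('n \<Rightarrow> 'n set) \<Rightarrow> 'n set \<Rightarrow> 'n set" where
  "nondesc'_set G par K = nondesc_set G par K - parents_set par K"

definition closed_set :: "'n set \<Rightarrow> ('n \<Rightarrow> 'n set) \<Rightarrow> 'n set \<Rightarrow> bool" where
  "closed_set G par K \<longleftrightarrow> (\<forall>s t k. s \<in> K \<and> t \<in> K \<and> (s, k) \<in> (edges G par)\<^sup>* \<and>
      (k, t) \<in> (edges G par)\<^sup>* \<longrightarrow> k \<in> K)"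

definition is_pmf_on :: "'v set \<Rightarrow> ('v \<Rightarrow> real) \<Rightarrow> bool" where
  "is_pmf_on A p \<longleftrightarrow> (\<forall>y. 0 \<le> p y) \<and> (\<forall>y. y \<notin> A \<longrightarrow> p y = 0) \<and> (\<Sum>y\<in>A. p y) = 1"

text \<open>Since all relevant functions vanish outside the finite set X s, pointwise sequential
closedness is the usual closedness in the finite-dimensional space.\<close>
definition pw_convex :: "('v \<Rightarrow> real) set \<Rightarrow> bool" where
  "pw_convex C \<longleftrightarrow> (\<forall>p\<in>C. \<forall>q\<in>C. \<forall>t::real. 0 \<le> t \<and> t \<le> 1 \<longrightarrow>
      (\<lambda>y. t * p y + (1 - t) * q y) \<in> C)"

definition pw_closed :: "('v \<Rightarrow> real) set \<Rightarrow> bool" where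
  "pw_closed C \<longleftrightarrow> (\<forall>(p :: nat \<Rightarrow> 'v \<Rightarrow> real) q. (\<forall>n. p n \<in> C) \<and>
      (\<forall>y. (\<lambda>n. p n y) \<longlonglongrightarrow> q y) \<longrightarrow> q \<in> C)"

definition credal_network ::
  "'n set \<Rightarrow> ('n \<Rightarrow> 'n set) \<Rightarrow> ('n \<Rightarrow> 'v set) \<Rightarrow> ('n \<Rightarrow> ('n \<Rightarrow> 'v) \<Rightarrow> ('v \<Rightarrow> real) set) \<Rightarrow> bool"
where
  "credal_network G par X M \<longleftrightarrow>
     finite G \<and> (\<forall>s\<in>G. par s \<subseteq> G) \<and> acyclic (edges G par) \<and>
     (\<forall>s\<in>G. finite (X s) \<and> X s \<noteq> {}) \<and>
     (\<forall>s\<in>G. \<forall>x\<in>PiE (par s) X.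
        M s x \<noteq> {} \<and> pw_convex (M s x) \<and> pw_closed (M s x) \<and> (\<forall>p\<in>M s x. is_pmf_on (X s) p))"

definition full_cond_prob :: "'a set \<Rightarrow> ('a set \<Rightarrow> 'a set \<Rightarrow> real) \<Rightarrow> bool" where
  "full_cond_prob \<Omega> P \<longleftrightarrow>
     (\<forall>B\<subseteq>\<Omega>. B \<noteq> {} \<longrightarrow>
        (\<forall>A\<subseteq>\<Omega>. 0 \<le> P A B) \<and> P \<Omega> B = 1 \<and>
        (\<forall>A1\<subseteq>\<Omega>. \<forall>A2\<subseteq>\<Omega>. A1 \<inter> A2 = {} \<longrightarrow> P (A1 \<union> A2) B = P A1 B + P A2 B) \<and>
        P B B = 1) \<and>
     (\<forall>A\<subseteq>\<Omega>. \<forall>B\<subseteq>\<Omega>. \<forall>C\<subseteq>\<Omega>. B \<noteq> {} \<longrightarrow> C \<inter> B \<noteq> {} \<longrightarrow>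
        P (A \<inter> C) B = P A (C \<inter> B) * P C B)"

definition irr_ext ::
  "'n set \<Rightarrow> ('n \<Rightarrow> 'n set) \<Rightarrow> ('n \<Rightarrow> 'v set) \<Rightarrow> ('n \<Rightarrow> ('n \<Rightarrow> 'v) \<Rightarrow> ('v \<Rightarrow> real) set)
   \<Rightarrow> (('n \<Rightarrow> 'v) set \<Rightarrow> ('n \<Rightarrow> 'v) set \<Rightarrow> real) set"
where
  "irr_ext S par X M = {P. full_cond_prob (PiE S X) P \<and>
     (\<forall>s\<in>S. \<forall>x\<in>PiE (nondesc S par s) X.
        (\<lambda>y. P {z\<in>PiE S X. z s = y} {z\<in>PiE S X. restrict z (nondesc S par s) = x})
          \<in> M s (restrict x (par s)))}"

definition lower_E_irr ::
  "'n set \<Rightarrow> ('n \<Rightarrow> 'n set) \<Rightarrow> ('n \<Rightarrow> 'v set) \<Rightarrow> ('n \<Rightarrow> ('n \<Rightarrow> 'v) \<Rightarrow> ('v \<Rightarrow> real) set)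
   \<Rightarrow> (('n \<Rightarrow> 'v) \<Rightarrow> real) \<Rightarrow> real"
where
  "lower_E_irr S par X M f =
     Inf ((\<lambda>P. \<Sum>z\<in>PiE S X. f z * P {z} (PiE S X)) ` irr_ext S par X M)"

end

theory Submission
  imports Defs
begin


lemma fcp_basic:
  assumes "full_cond_prob \<Omega> P" "B \<subseteq> \<Omega>" "B \<noteq> {}"
  shows "\<And>A. A \<subseteq> \<Omega> \<Longrightarrow> 0 \<le> P A B" "P \<Omega> B = 1" "P B B = 1"
    "\<And>A1 A2. A1 \<subseteq> \<Omega> \<Longrightarrow> A2 \<subseteq> \<Omega> \<Longrightarrow> A1 \<inter> A2 = {} \<Longrightarrow> P (A1 \<union> A2) B = P A1 B + P A2 B"
proof -
  have h: "(\<forall>A\<subseteq>\<Omega>. 0 \<le> P A B) \<and> P \<Omega> B = 1 \<and>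
        (\<forall>A1\<subseteq>\<Omega>. \<forall>A2\<subseteq>\<Omega>. A1 \<inter> A2 = {} \<longrightarrow> P (A1 \<union> A2) B = P A1 B + P A2 B) \<and>
        P B B = 1" using assms unfolding full_cond_prob_def by simp
  show "\<And>A. A \<subseteq> \<Omega> \<Longrightarrow> 0 \<le> P A B" "P \<Omega> B = 1" "P B B = 1"
    "\<And>A1 A2. A1 \<subseteq> \<Omega> \<Longrightarrow> A2 \<subseteq> \<Omega> \<Longrightarrow> A1 \<inter> A2 = {} \<Longrightarrow> P (A1 \<union> A2) B = P A1 B + P A2 B"
    using h by auto
qed

lemma fcp_F2:
  assumes "full_cond_prob \<Omega> P" "A \<subseteq> \<Omega>" "B \<subseteq> \<Omega>" "C \<subseteq> \<Omega>" "B \<noteq> {}" "C \<inter> B \<noteq> {}"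
  shows "P (A \<inter> C) B = P A (C \<inter> B) * P C B"
  using assms unfolding full_cond_prob_def by simp

lemma fcp_empty:
  assumes "full_cond_prob \<Omega> P" "B \<subseteq> \<Omega>" "B \<noteq> {}"
  shows "P {} B = 0"
  using fcp_basic(4)[OF assms, of "{}" "{}"] by simp

lemma fcp_mono:
  assumes "full_cond_prob \<Omega> P" "B \<subseteq> \<Omega>" "B \<noteq> {}" "A1 \<subseteq> A2" "A2 \<subseteq> \<Omega>"
  shows "P A1 B \<le> P A2 B"
proof -
  have "A2 = A1 \<union> (A2 - A1)" using assms by blast
  then have "P A2 B = P A1 B + P (A2 - A1) B"
    using fcp_basic(4)[OF assms(1-3), of A1 "A2 - A1"] assms by auto
  moreover have "0 \<le> P (A2 - A1) B" using fcp_basic(1)[OF assms(1-3)] assms(5) by blast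
  ultimately show ?thesis by simp
qed

lemma fcp_le1:
  assumes "full_cond_prob \<Omega> P" "B \<subseteq> \<Omega>" "B \<noteq> {}" "A \<subseteq> \<Omega>"
  shows "P A B \<le> 1"
  using fcp_mono[OF assms(1-3) assms(4)] fcp_basic(2)[OF assms(1-3)] by simp

lemma fcp_sum:
  assumes "full_cond_prob \<Omega> P" "B \<subseteq> \<Omega>" "B \<noteq> {}" "finite I"
    "\<And>i. i \<in> I \<Longrightarrow> A i \<subseteq> \<Omega>"
    "\<And>i j. i \<in> I \<Longrightarrow> j \<in> I \<Longrightarrow> i \<noteq> j \<Longrightarrow> A i \<inter> A j = {}"
  shows "P (\<Union>i\<in>I. A i) B = (\<Sum>i\<in>I. P (A i) B)"
  using assms(4-6)
proof (induction I rule: finite_induct)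
  case empty
  then show ?case using fcp_empty[OF assms(1-3)] by simp
next
  case (insert a I)
  have "P (\<Union>i\<in>insert a I. A i) B = P (A a \<union> (\<Union>i\<in>I. A i)) B" by simp
  also have "\<dots> = P (A a) B + P (\<Union>i\<in>I. A i) B"
    apply (rule fcp_basic(4)[OF assms(1-3)])
    subgoal using insert.prems by auto
    subgoal using insert.prems by auto
    subgoal using insert.prems insert.hyps by fastforce
    done
  also have "\<dots> = P (A a) B + (\<Sum>i\<in>I. P (A i) B)"
    using insert by auto
  finally show ?case using insert.hyps by simp
qed

lemma fcp_point_sum:
  assumes "full_cond_prob \<Omega> P" "B \<subseteq> \<Omega>" "B \<noteq> {}" "finite A" "A \<subseteq> \<Omega>"
  shows "P A B = (\<Sum>z\<in>A. P {z} B)"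
  using fcp_sum[OF assms(1-4), of "\<lambda>z. {z}"] assms(5) by auto



definition cp :: "('a \<Rightarrow> real) \<Rightarrow> 'a set \<Rightarrow> 'a set \<Rightarrow> real" where
  "cp w A B = sum w (A \<inter> B) / sum w B"

lemma sum_pos_nonempty:
  fixes w :: "'a \<Rightarrow> real"
  assumes "finite B" "B \<noteq> {}" "\<And>z. z \<in> B \<Longrightarrow> 0 < w z"
  shows "0 < sum w B"
  using assms by (simp add: sum_pos)

lemma cp_fcp:
  fixes w :: "'a \<Rightarrow> real"
  assumes fin: "finite \<Omega>" and pos: "\<And>z. z \<in> \<Omega> \<Longrightarrow> 0 < w z"
  shows "full_cond_prob \<Omega> (cp w)"
proof -
  have pB: "0 < sum w B" if B: "B \<subseteq> \<Omega>" "B \<noteq> {}" for B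
  proof -
    have fB: "finite B" using B fin finite_subset by auto
    show ?thesis using sum_pos_nonempty[OF fB B(2)] pos B by auto
  qed
  show ?thesis
  unfolding full_cond_prob_def
  proof (intro conjI allI impI)
    fix B A assume B: "B \<subseteq> \<Omega>" "B \<noteq> {}" and A: "A \<subseteq> \<Omega>"
    have "0 \<le> sum w (A \<inter> B)" using pos B by (intro sum_nonneg) (auto simp: less_imp_le subset_iff)
    then show "0 \<le> cp w A B" unfolding cp_def using pB[OF B] by simp
  next
    fix B assume B: "B \<subseteq> \<Omega>" "B \<noteq> {}"
    show "cp w \<Omega> B = 1" unfolding cp_def using pB[OF B] B by (simp add: Int_absorb1)
  next
    fix B assume B: "B \<subseteq> \<Omega>" "B \<noteq> {}"
    show "cp w B B = 1" unfolding cp_def using pB[OF B] by simp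
  next
    fix B A1 A2 assume B: "B \<subseteq> \<Omega>" "B \<noteq> {}" and A: "A1 \<subseteq> \<Omega>" "A2 \<subseteq> \<Omega>" "A1 \<inter> A2 = {}"
    have fB: "finite B" using B fin finite_subset by auto
    have "sum w ((A1 \<union> A2) \<inter> B) = sum w (A1 \<inter> B \<union> A2 \<inter> B)" by (simp add: Int_Un_distrib2)
    also have "\<dots> = sum w (A1 \<inter> B) + sum w (A2 \<inter> B)"
      using fB A by (intro sum.union_disjoint) auto
    finally show "cp w (A1 \<union> A2) B = cp w A1 B + cp w A2 B"
      unfolding cp_def by (simp add: add_divide_distrib)
  next
    fix A B C assume "A \<subseteq> \<Omega>" "B \<subseteq> \<Omega>" "C \<subseteq> \<Omega>" "B \<noteq> {}" "C \<inter> B \<noteq> {}"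
    then have p1: "0 < sum w (C \<inter> B)"
      using pos fin by (intro sum_pos_nonempty) (auto intro: finite_subset)
    have "A \<inter> C \<inter> B = A \<inter> (C \<inter> B)" by blast
    then show "cp w (A \<inter> C) B = cp w A (C \<inter> B) * cp w C B"
      unfolding cp_def using p1 by simp
  qed
qed

lemma cp_bounds:
  fixes w :: "'a \<Rightarrow> real"
  assumes "finite B" "\<And>z. z \<in> B \<Longrightarrow> 0 \<le> w z"
  shows "0 \<le> cp w A B" "cp w A B \<le> 1"
proof -
  have a: "sum w (A \<inter> B) \<le> sum w B" using assms by (intro sum_mono2) auto
  have b: "0 \<le> sum w (A \<inter> B)" using assms by (intro sum_nonneg) auto
  show "0 \<le> cp w A B" unfolding cp_def using a b by simp
  show "cp w A B \<le> 1" unfolding cp_def using a b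
    by (cases "sum w B = 0") (simp_all add: divide_le_eq_1)
qed

lemma tendsto_const_eq:
  fixes c d :: real
  assumes "(\<lambda>n. f n) \<longlonglongrightarrow> d" "\<And>n. f n = c"
  shows "d = c"
proof -
  have "(\<lambda>n. c) \<longlonglongrightarrow> d" using assms(1) assms(2) by simp
  then show ?thesis using LIMSEQ_const_iff by metis
qed

lemma fcp_limit:
  assumes fc: "\<And>n. full_cond_prob \<Omega> (Pn n)"
    and lim: "\<And>A B. A \<subseteq> \<Omega> \<Longrightarrow> B \<subseteq> \<Omega> \<Longrightarrow> (\<lambda>n. Pn n A B) \<longlonglongrightarrow> P A B"
  shows "full_cond_prob \<Omega> P"
  unfolding full_cond_prob_def
proof (intro conjI allI impI)
  fix B A assume B: "B \<subseteq> \<Omega>" "B \<noteq> {}" and A: "A \<subseteq> \<Omega>"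
  show "0 \<le> P A B" using lim[OF A B(1)] fcp_basic(1)[OF fc B A]
      by (intro LIMSEQ_le_const[of "\<lambda>n. Pn n A B"]) auto
next
  fix B assume B: "B \<subseteq> \<Omega>" "B \<noteq> {}"
  show "P \<Omega> B = 1" using tendsto_const_eq[OF lim[OF order_refl B(1)]] fcp_basic(2)[OF fc B] by blast
next
  fix B assume B: "B \<subseteq> \<Omega>" "B \<noteq> {}"
  show "P B B = 1" using tendsto_const_eq[OF lim[OF B(1) B(1)]] fcp_basic(3)[OF fc B] by blast
next
  fix B A1 A2 assume B: "B \<subseteq> \<Omega>" "B \<noteq> {}" and A: "A1 \<subseteq> \<Omega>" "A2 \<subseteq> \<Omega>" "A1 \<inter> A2 = {}"
  have "(\<lambda>n. Pn n (A1 \<union> A2) B) \<longlonglongrightarrow> P (A1 \<union> A2) B" using A B by (intro lim) auto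
  moreover have "(\<lambda>n. Pn n (A1 \<union> A2) B) = (\<lambda>n. Pn n A1 B + Pn n A2 B)"
    using fcp_basic(4)[OF fc B A] by simp
  moreover have "(\<lambda>n. Pn n A1 B + Pn n A2 B) \<longlonglongrightarrow> P A1 B + P A2 B"
    using A B by (intro tendsto_add lim) auto
  ultimately show "P (A1 \<union> A2) B = P A1 B + P A2 B" using LIMSEQ_unique by metis
next
  fix A B C assume h: "A \<subseteq> \<Omega>" "B \<subseteq> \<Omega>" "C \<subseteq> \<Omega>" "B \<noteq> {}" "C \<inter> B \<noteq> {}"
  have "(\<lambda>n. Pn n (A \<inter> C) B) \<longlonglongrightarrow> P (A \<inter> C) B" using h by (intro lim) auto
  moreover have "(\<lambda>n. Pn n (A \<inter> C) B) = (\<lambda>n. Pn n A (C \<inter> B) * Pn n C B)"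
    using fcp_F2[OF fc h] by simp
  moreover have "(\<lambda>n. Pn n A (C \<inter> B) * Pn n C B) \<longlonglongrightarrow> P A (C \<inter> B) * P C B"
    using h by (intro tendsto_mult lim) auto
  ultimately show "P (A \<inter> C) B = P A (C \<inter> B) * P C B" using LIMSEQ_unique by metis
qed

lemma compact_subseq:
  fixes f :: "nat \<Rightarrow> 'i \<Rightarrow> real"
  assumes "finite I" "\<And>n i. i \<in> I \<Longrightarrow> \<bar>f n i\<bar> \<le> M"
  shows "\<exists>r. strict_mono r \<and> (\<forall>i\<in>I. convergent (\<lambda>n. f (r n) i))"
  using assms
proof (induction I rule: finite_induct)
  case empty
  then show ?case by (intro exI[of _ id]) (auto simp: strict_mono_def)
next
  case (insert a I)
  then obtain r where r: "strict_mono r" "\<forall>i\<in>I. convergent (\<lambda>n. f (r n) i)" by auto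
  obtain r' where r': "strict_mono r'" "monoseq (\<lambda>n. f (r (r' n)) a)"
    using seq_monosub[of "\<lambda>n. f (r n) a"] by (auto simp: o_def)
  have "Bseq (\<lambda>n. f (r (r' n)) a)" using insert.prems by (intro BseqI'[of _ M]) auto
  then have ca: "convergent (\<lambda>n. f (r (r' n)) a)" using Bseq_monoseq_convergent r'(2) by blast
  have "\<forall>i\<in>I. convergent (\<lambda>n. f (r (r' n)) i)"
  proof
    fix i assume "i \<in> I"
    then obtain L where "(\<lambda>n. f (r n) i) \<longlonglongrightarrow> L" using r(2) convergent_def by blast
    then have "(\<lambda>n. f (r (r' n)) i) \<longlonglongrightarrow> L" using LIMSEQ_subseq_LIMSEQ[OF _ r'(1)] by (auto simp: o_def)
    then show "convergent (\<lambda>n. f (r (r' n)) i)" by (auto simp: convergent_def)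
  qed
  then show ?case using ca r r' by (intro exI[of _ "r \<circ> r'"]) (auto simp: o_def intro: strict_mono_o[of r r', unfolded o_def])
qed



definition rw :: "'a set \<Rightarrow> ('a set \<Rightarrow> 'a set \<Rightarrow> real) \<Rightarrow> real \<Rightarrow> 'a \<Rightarrow> real" where
  "rw \<Omega> Q e u = (\<Sum>B\<in>{B. B \<subseteq> \<Omega> \<and> B \<noteq> {}}. if u \<in> B then e ^ card (\<Omega> - B) * Q {u} B else 0)"

lemma rw_pos:
  assumes fc: "full_cond_prob \<Omega> Q" and fin: "finite \<Omega>" and e: "0 < e" and u: "u \<in> \<Omega>"
  shows "0 < rw \<Omega> Q e u"
proof -
  let ?F = "{B. B \<subseteq> \<Omega> \<and> B \<noteq> {}}"
  have fF: "finite ?F" using fin by simp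
  have nn: "\<And>B. B \<in> ?F \<Longrightarrow> 0 \<le> (if u \<in> B then e ^ card (\<Omega> - B) * Q {u} B else 0)"
  proof -
    fix B assume "B \<in> ?F"
    then show "0 \<le> (if u \<in> B then e ^ card (\<Omega> - B) * Q {u} B else 0)"
      using fcp_basic(1)[OF fc, of B "{u}"] e by auto
  qed
  have "{u} \<in> ?F" using u by auto
  moreover have "0 < (if u \<in> {u} then e ^ card (\<Omega> - {u}) * Q {u} {u} else 0)"
    using fcp_basic(3)[OF fc, of "{u}"] u e by auto
  ultimately show ?thesis unfolding rw_def using fF nn
    by (metis (no_types, lifting) sum_pos2)
qed

lemma rw_sum:
  assumes fc: "full_cond_prob \<Omega> Q" and fin: "finite \<Omega>" and C: "C \<subseteq> \<Omega>"
  shows "sum (rw \<Omega> Q e) C = (\<Sum>B\<in>{B. B \<subseteq> \<Omega> \<and> B \<noteq> {}}. e ^ card (\<Omega> - B) * Q (C \<inter> B) B)"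
proof -
  let ?F = "{B. B \<subseteq> \<Omega> \<and> B \<noteq> {}}"
  have fC: "finite C" using C fin finite_subset by auto
  have "sum (rw \<Omega> Q e) C = (\<Sum>B\<in>?F. \<Sum>u\<in>C. if u \<in> B then e ^ card (\<Omega> - B) * Q {u} B else 0)"
    unfolding rw_def by (rule sum.swap)
  also have "\<dots> = (\<Sum>B\<in>?F. e ^ card (\<Omega> - B) * Q (C \<inter> B) B)"
  proof (rule sum.cong[OF refl])
    fix B assume B: "B \<in> ?F"
    have "(\<Sum>u\<in>C. if u \<in> B then e ^ card (\<Omega> - B) * Q {u} B else 0)
        = (\<Sum>u\<in>C \<inter> B. e ^ card (\<Omega> - B) * Q {u} B)"
      using fC by (simp add: sum.inter_restrict)
    also have "\<dots> = e ^ card (\<Omega> - B) * (\<Sum>u\<in>C \<inter> B. Q {u} B)" by (simp add: sum_distrib_left)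
    also have "(\<Sum>u\<in>C \<inter> B. Q {u} B) = Q (C \<inter> B) B"
      using B C fC by (intro fcp_point_sum[OF fc, symmetric]) auto
    finally show "(\<Sum>u\<in>C. if u \<in> B then e ^ card (\<Omega> - B) * Q {u} B else 0) = e ^ card (\<Omega> - B) * Q (C \<inter> B) B" .
  qed
  finally show ?thesis .
qed

lemma min_layer_sub:
  assumes fc: "full_cond_prob \<Omega> Q" and fin: "finite \<Omega>" and C: "C \<subseteq> \<Omega>"
    and B: "B \<subseteq> \<Omega>" "B \<noteq> {}" and pos: "0 < Q (C \<inter> B) B"
    and minim: "\<And>B'. B' \<subseteq> \<Omega> \<Longrightarrow> B' \<noteq> {} \<Longrightarrow> 0 < Q (C \<inter> B') B' \<Longrightarrow> card (\<Omega> - B) \<le> card (\<Omega> - B')"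
  shows "C \<subseteq> B"
proof -
  define B' where "B' = B \<union> C"
  have B': "B' \<subseteq> \<Omega>" "B' \<noteq> {}" using B C unfolding B'_def by auto
  have QCB: "Q (C \<inter> B) B = Q C B"
    using fcp_F2[OF fc C B(1) B(1) B(2)] fcp_basic(3)[OF fc B] B(2) by simp
  have "0 < Q C B'"
  proof (rule ccontr)
    assume "\<not> 0 < Q C B'"
    then have z: "Q C B' = 0" using fcp_basic(1)[OF fc B' C] by simp
    have "Q (C \<inter> B) B' = Q C (B \<inter> B') * Q B B'"
      using fcp_F2[OF fc C B'(1) B(1) B'(2)] B(2) unfolding B'_def by auto
    moreover have "B \<inter> B' = B" unfolding B'_def by auto
    moreover have "Q (C \<inter> B) B' \<le> Q C B'" using fcp_mono[OF fc B'] C by auto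
    moreover have "0 \<le> Q (C \<inter> B) B'" using fcp_basic(1)[OF fc B', of "C \<inter> B"] C by auto
    ultimately have "Q C B * Q B B' = 0" using z by simp
    then have QB: "Q B B' = 0" using pos QCB by simp
    have eqB: "B \<union> (C - B) = B'" unfolding B'_def by auto
    have "Q B' B' = Q B B' + Q (C - B) B'"
      using fcp_basic(4)[OF fc B', of B "C - B"] B C eqB by auto
    moreover have "Q (C - B) B' \<le> Q C B'" using fcp_mono[OF fc B', of "C - B" C] C by auto
    moreover have "Q B' B' = 1" using fcp_basic(3)[OF fc B'] by simp
    ultimately show False using QB z by simp
  qed
  moreover have "C \<inter> B' = C" unfolding B'_def by auto
  ultimately have "card (\<Omega> - B) \<le> card (\<Omega> - B')" using minim[OF B'] by simp
  moreover have "\<Omega> - B' \<subseteq> \<Omega> - B" unfolding B'_def by auto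
  ultimately have "\<Omega> - B' = \<Omega> - B" using fin by (meson card_seteq finite_Diff)
  then have "B' = B" using B B' by blast
  then show ?thesis unfolding B'_def by auto
qed

lemma rw_approx:
  assumes fc: "full_cond_prob \<Omega> Q" and fin: "finite \<Omega>"
    and A: "A \<subseteq> \<Omega>" and C: "C \<subseteq> \<Omega>" "C \<noteq> {}"
    and e: "\<And>n. 0 < e n" "e \<longlonglongrightarrow> 0"
  shows "(\<lambda>n. cp (rw \<Omega> Q (e n)) A C) \<longlonglongrightarrow> Q A C"
proof -
  let ?F = "{B. B \<subseteq> \<Omega> \<and> B \<noteq> {}}"
  have fF: "finite ?F" using fin by simp
  define k where "k B = card (\<Omega> - B)" for B
  define G where "G = {B \<in> ?F. 0 < Q (C \<inter> B) B}"
  have CG: "C \<in> G" unfolding G_def using C fcp_basic(3)[OF fc C] by simp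
  have fG: "finite G" using fF unfolding G_def by (rule rev_finite_subset) auto
  define m where "m = Min (k ` G)"
  have mle: "\<And>B. B \<in> G \<Longrightarrow> m \<le> k B" unfolding m_def using fG by simp
  have "m \<in> k ` G" unfolding m_def using fG CG by (intro Min_in) auto
  then obtain B0 where B0: "B0 \<in> G" "k B0 = m" by auto
  have nnC: "0 \<le> Q (C \<inter> B) B" if "B \<in> ?F" for B
    using fcp_basic(1)[OF fc, of B "C \<inter> B"] C that by auto
  have below: "\<And>B. B \<in> ?F \<Longrightarrow> k B < m \<Longrightarrow> Q (C \<inter> B) B = 0"
  proof (rule ccontr)
    fix B assume B: "B \<in> ?F" "k B < m" "Q (C \<inter> B) B \<noteq> 0"
    then have "B \<in> G" using nnC[OF B(1)] unfolding G_def by auto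
    then show False using mle B(2) by fastforce
  qed
  have belowA: "Q (A \<inter> C \<inter> B) B = 0" if "B \<in> ?F" "k B < m" for B
  proof -
    have "Q (A \<inter> C \<inter> B) B \<le> Q (C \<inter> B) B" using fcp_mono[OF fc, of B "A \<inter> C \<inter> B" "C \<inter> B"] that C by auto
    moreover have "0 \<le> Q (A \<inter> C \<inter> B) B" using fcp_basic(1)[OF fc, of B "A \<inter> C \<inter> B"] that A by auto
    ultimately show ?thesis using below[OF that] by simp
  qed
  have layer: "Q (A \<inter> C \<inter> B) B = Q A C * Q (C \<inter> B) B" if B: "B \<in> ?F" "k B = m" for B
  proof (cases "0 < Q (C \<inter> B) B")
    case True
    have "C \<subseteq> B"
      apply (rule min_layer_sub[OF fc fin C(1)])
      using B True mle unfolding G_def k_def by auto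
    moreover have "C \<inter> B \<noteq> {}" using C \<open>C \<subseteq> B\<close> by auto
    ultimately have "Q (A \<inter> C) B = Q A (C \<inter> B) * Q C B"
      using fcp_F2[OF fc A, of B C] B C by auto
    moreover have "A \<inter> C \<inter> B = A \<inter> C" "C \<inter> B = C" using \<open>C \<subseteq> B\<close> by auto
    ultimately show ?thesis by simp
  next
    case False
    then have z: "Q (C \<inter> B) B = 0" using nnC[OF B(1)] by simp
    have "Q (A \<inter> C \<inter> B) B \<le> Q (C \<inter> B) B" using fcp_mono[OF fc, of B "A \<inter> C \<inter> B" "C \<inter> B"] B C by auto
    moreover have "0 \<le> Q (A \<inter> C \<inter> B) B" using fcp_basic(1)[OF fc, of B "A \<inter> C \<inter> B"] B A by auto
    ultimately show ?thesis using z by simp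
  qed
  define F0 where "F0 = {B \<in> ?F. k B = m}"
  define F1 where "F1 = {B \<in> ?F. m < k B}"
  define Fl where "Fl = {B \<in> ?F. k B < m}"
  have Fsplit: "?F = Fl \<union> (F0 \<union> F1)" unfolding F0_def F1_def Fl_def by auto
  have fins: "finite Fl" "finite F0" "finite F1" using fF unfolding F0_def F1_def Fl_def
    by (auto intro: rev_finite_subset)
  have split: "(\<Sum>B\<in>?F. e' ^ k B * x B) = e' ^ m * ((\<Sum>B\<in>F0. x B) + (\<Sum>B\<in>F1. e' ^ (k B - m) * x B))"
    if "\<And>B. B \<in> Fl \<Longrightarrow> x B = 0" for e' :: real and x
  proof -
    have "(\<Sum>B\<in>?F. e' ^ k B * x B) = (\<Sum>B\<in>Fl. e' ^ k B * x B) + ((\<Sum>B\<in>F0. e' ^ k B * x B) + (\<Sum>B\<in>F1. e' ^ k B * x B))"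
    proof -
      have "sum (\<lambda>B. e' ^ k B * x B) ?F = sum (\<lambda>B. e' ^ k B * x B) Fl + sum (\<lambda>B. e' ^ k B * x B) (F0 \<union> F1)"
        unfolding Fsplit using fins by (intro sum.union_disjoint) (auto simp: F0_def F1_def Fl_def)
      also have "sum (\<lambda>B. e' ^ k B * x B) (F0 \<union> F1) = sum (\<lambda>B. e' ^ k B * x B) F0 + sum (\<lambda>B. e' ^ k B * x B) F1"
        using fins by (intro sum.union_disjoint) (auto simp: F0_def F1_def)
      finally show ?thesis .
    qed
    also have "(\<Sum>B\<in>Fl. e' ^ k B * x B) = 0" using that by simp
    also have "(\<Sum>B\<in>F0. e' ^ k B * x B) = e' ^ m * (\<Sum>B\<in>F0. x B)"
      unfolding F0_def by (simp add: sum_distrib_left)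
    also have "(\<Sum>B\<in>F1. e' ^ k B * x B) = e' ^ m * (\<Sum>B\<in>F1. e' ^ (k B - m) * x B)"
      unfolding sum_distrib_left
    proof (rule sum.cong[OF refl])
      fix B assume "B \<in> F1"
      then have "k B = m + (k B - m)" unfolding F1_def by auto
      then have "e' ^ k B = e' ^ m * e' ^ (k B - m)" by (metis power_add)
      then show "e' ^ k B * x B = e' ^ m * (e' ^ (k B - m) * x B)" by simp
    qed
    finally show ?thesis by (simp add: algebra_simps)
  qed
  define c where "c = (\<Sum>B\<in>F0. Q (C \<inter> B) B)"
  have cpos: "0 < c"
  proof -
    have "B0 \<in> F0" using B0 unfolding F0_def G_def by auto
    moreover have "0 < Q (C \<inter> B0) B0" using B0 unfolding G_def by auto
    ultimately show ?thesis unfolding c_def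
      by (rule sum_pos2[OF fins(2)]) (use nnC in \<open>auto simp: F0_def\<close>)
  qed
  define N1 where "N1 e' = (\<Sum>B\<in>F1. e' ^ (k B - m) * Q (A \<inter> C \<inter> B) B)" for e'
  define D1 where "D1 e' = (\<Sum>B\<in>F1. e' ^ (k B - m) * Q (C \<inter> B) B)" for e'
  have eq: "cp (rw \<Omega> Q (e n)) A C = (Q A C * c + N1 (e n)) / (c + D1 (e n))" for n
  proof -
    have "sum (rw \<Omega> Q (e n)) (A \<inter> C) = (\<Sum>B\<in>?F. e n ^ k B * Q (A \<inter> C \<inter> B) B)"
      using rw_sum[OF fc fin, of "A \<inter> C" "e n"] A unfolding k_def by auto
    also have "\<dots> = e n ^ m * ((\<Sum>B\<in>F0. Q (A \<inter> C \<inter> B) B) + N1 (e n))"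
      unfolding N1_def by (rule split) (use belowA in \<open>auto simp: Fl_def\<close>)
    also have "(\<Sum>B\<in>F0. Q (A \<inter> C \<inter> B) B) = Q A C * c"
      unfolding c_def sum_distrib_left by (rule sum.cong) (auto simp: F0_def layer)
    finally have num: "sum (rw \<Omega> Q (e n)) (A \<inter> C) = e n ^ m * (Q A C * c + N1 (e n))" .
    have "sum (rw \<Omega> Q (e n)) C = (\<Sum>B\<in>?F. e n ^ k B * Q (C \<inter> B) B)"
      unfolding rw_sum[OF fc fin C(1), of "e n"] k_def by simp
    also have "\<dots> = e n ^ m * (c + D1 (e n))"
      unfolding D1_def c_def by (rule split) (use below in \<open>auto simp: Fl_def\<close>)
    finally have den: "sum (rw \<Omega> Q (e n)) C = e n ^ m * (c + D1 (e n))" .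
    have "A \<inter> C \<inter> C = A \<inter> C" by auto
    then show ?thesis unfolding cp_def num den using e(1)[of n] by simp
  qed
  have lim0: "(\<lambda>n. (\<Sum>B\<in>F1. e n ^ (k B - m) * y B)) \<longlonglongrightarrow> 0" for y
  proof -
    have "(\<lambda>n. (\<Sum>B\<in>F1. e n ^ (k B - m) * y B)) \<longlonglongrightarrow> (\<Sum>B\<in>F1. 0 ^ (k B - m) * y B)"
      by (intro tendsto_intros e(2))
    moreover have "(\<Sum>B\<in>F1. (0::real) ^ (k B - m) * y B) = 0"
      by (rule sum.neutral) (auto simp: F1_def)
    ultimately show ?thesis by simp
  qed
  have "(\<lambda>n. (Q A C * c + N1 (e n)) / (c + D1 (e n))) \<longlonglongrightarrow> (Q A C * c + 0) / (c + 0)"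
    unfolding N1_def D1_def using cpos by (intro tendsto_intros lim0) auto
  then show ?thesis unfolding eq using cpos by simp
qed



definition fib :: "('n \<Rightarrow> 'v set) \<Rightarrow> 'n set \<Rightarrow> 'n set \<Rightarrow> ('n \<Rightarrow> 'v) \<Rightarrow> ('n \<Rightarrow> 'v) set" where
  "fib X W V x = {u \<in> PiE W X. \<forall>i\<in>V. u i = x i}"

definition dep :: "(('n \<Rightarrow> 'v) \<Rightarrow> real) \<Rightarrow> 'n set \<Rightarrow> bool" where
  "dep F A \<longleftrightarrow> (\<forall>z z'. (\<forall>i\<in>A. z i = z' i) \<longrightarrow> F z = F z')"

definition mrg :: "'n set \<Rightarrow> ('n \<Rightarrow> 'v) \<Rightarrow> ('n \<Rightarrow> 'v) \<Rightarrow> ('n \<Rightarrow> 'v)" where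
  "mrg W u x = (\<lambda>i. if i \<in> W then u i else x i)"

lemma depD: "dep F A \<Longrightarrow> (\<And>i. i \<in> A \<Longrightarrow> z i = z' i) \<Longrightarrow> F z = F z'"
  unfolding dep_def by blast

lemma fib_finite:
  assumes "finite W" "\<And>i. i \<in> W \<Longrightarrow> finite (X i)"
  shows "finite (fib X W V x)"
proof -
  have "finite (PiE W X)" using assms by (intro finite_PiE) auto
  then show ?thesis unfolding fib_def by (rule rev_finite_subset) auto
qed

lemma fib_sub: "fib X W V x \<subseteq> PiE W X" unfolding fib_def by auto

lemma sum_split1:
  fixes F :: "('n \<Rightarrow> 'v) \<Rightarrow> real"
  assumes fin: "finite G" "\<And>i. i \<in> G \<Longrightarrow> finite (X i)" and t: "t \<in> G" "t \<notin> V"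
  shows "sum F (fib X G V x) = (\<Sum>y\<in>X t. sum F (fib X G (insert t V) (x(t := y))))"
proof -
  have eq: "{z \<in> fib X G V x. z t = y} = fib X G (insert t V) (x(t := y))" for y
    using t unfolding fib_def by auto
  have "sum F (fib X G V x) = (\<Sum>y\<in>X t. sum F {z \<in> fib X G V x. z t = y})"
    using fib_finite[OF fin] fin t
    by (intro sum.group[symmetric]) (auto simp: fib_def PiE_iff)
  then show ?thesis unfolding eq .
qed

lemma sum_marg:
  fixes F :: "('n \<Rightarrow> 'v) \<Rightarrow> real"
  assumes fin: "finite G" "\<And>i. i \<in> G \<Longrightarrow> finite (X i)" and W: "W \<subseteq> G"
  shows "sum F (fib X G V x) = (\<Sum>u\<in>fib X W (V \<inter> W) x. sum F (fib X G (V \<union> W) (mrg W u x)))"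
proof -
  have finW: "finite W" using W fin finite_subset by auto
  have eq: "{z \<in> fib X G V x. restrict z W = u} = fib X G (V \<union> W) (mrg W u x)"
    if u: "u \<in> fib X W (V \<inter> W) x" for u
  proof (intro set_eqI iffI)
    fix z assume "z \<in> {z \<in> fib X G V x. restrict z W = u}"
    then show "z \<in> fib X G (V \<union> W) (mrg W u x)"
      unfolding fib_def mrg_def by (auto dest: fun_cong[where x=i for i])
  next
    fix z assume z: "z \<in> fib X G (V \<union> W) (mrg W u x)"
    have "restrict z W = u"
    proof
      fix i show "restrict z W i = u i"
        using z u unfolding fib_def mrg_def by (cases "i \<in> W") (auto simp: PiE_iff extensional_def)
    qed
    moreover have "z \<in> fib X G V x"
      using z u unfolding fib_def mrg_def by auto
    ultimately show "z \<in> {z \<in> fib X G V x. restrict z W = u}" by simp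
  qed
  have "sum F (fib X G V x) = (\<Sum>u\<in>fib X W (V \<inter> W) x. sum F {z \<in> fib X G V x. restrict z W = u})"
    using fib_finite[OF fin, where V=V and x=x] fib_finite[OF finW, where X=X and V="V \<inter> W" and x=x] fin W
    by (intro sum.group[symmetric]) (auto simp: fib_def PiE_iff)
  also have "\<dots> = (\<Sum>u\<in>fib X W (V \<inter> W) x. sum F (fib X G (V \<union> W) (mrg W u x)))"
    by (rule sum.cong[OF refl]) (simp add: eq)
  finally show ?thesis .
qed

lemma mrg_PiE:
  assumes "u \<in> PiE W X" "x \<in> PiE G X" "W \<subseteq> G"
  shows "mrg W u x \<in> PiE G X"
  using assms unfolding mrg_def by (auto simp: PiE_iff extensional_def)

lemma fib_all:
  assumes "x \<in> PiE G X"
  shows "fib X G G x = {x}"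
  using assms unfolding fib_def by (auto intro: PiE_ext)

lemma sum1:
  fixes q :: "'n \<Rightarrow> ('n \<Rightarrow> 'v) \<Rightarrow> real"
  assumes fin: "finite G" "\<And>i. i \<in> G \<Longrightarrow> finite (X i)"
    and acyc: "acyclic (edges G par)"
    and S: "S \<subseteq> G"
    and dep: "\<And>t. t \<in> S \<Longrightarrow> dep (q t) (insert t (par t))"
    and norm: "\<And>t z. t \<in> S \<Longrightarrow> z \<in> PiE G X \<Longrightarrow> (\<Sum>y\<in>X t. q t (z(t := y))) = 1"
    and x: "x \<in> PiE G X"
  shows "(\<Sum>z\<in>fib X G (G - S) x. \<Prod>t\<in>S. q t z) = 1"
  using S dep norm x
proof (induction "card S" arbitrary: S x rule: less_induct)
  case less
  show ?case
  proof (cases "S = {}")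
    case True
    then show ?thesis using fib_all[OF less.prems(4)] by simp
  next
    case False
    have finS: "finite S" using less.prems(1) fin finite_subset by auto
    define R where "R = {(p, t). p \<in> S \<and> t \<in> S \<and> p \<in> par t}"
    have "R \<subseteq> edges G par" using less.prems(1) unfolding R_def edges_def by auto
    moreover have "finite (edges G par)" unfolding edges_def
      by (rule rev_finite_subset[of "G \<times> G"]) (use fin(1) in auto)
    ultimately have "wf R" using acyclic_subset[OF acyc] finite_subset by (blast intro: finite_acyclic_wf)
    note wfR = this
    from False obtain a where aS: "a \<in> S" by auto
    obtain t0 where t0: "t0 \<in> S" "\<And>p. (p, t0) \<in> R \<Longrightarrow> p \<notin> S"
      using wfE_min[OF wfR aS] by blast
    have part: "p \<notin> S" if "p \<in> par t0" for p
    proof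
      assume "p \<in> S"
      then have "(p, t0) \<in> R" unfolding R_def using t0(1) that by simp
      then show False using t0(2) \<open>p \<in> S\<close> by blast
    qed
    define S' where "S' = S - {t0}"
    have cardS': "card S' < card S" unfolding S'_def using card_Diff1_less[OF finS t0(1)] .
    have t0G: "t0 \<in> G" using t0 less.prems(1) by auto
    have ins: "insert t0 (G - S) = G - S'" unfolding S'_def using t0 less.prems(1) by auto
    have "(\<Sum>z\<in>fib X G (G - S) x. \<Prod>t\<in>S. q t z)
        = (\<Sum>y\<in>X t0. \<Sum>z\<in>fib X G (G - S') (x(t0 := y)). \<Prod>t\<in>S. q t z)"
      using sum_split1[OF fin t0G, where V="G - S" and x=x and F="\<lambda>z. \<Prod>t\<in>S. q t z"] t0 ins by auto
    also have "\<dots> = (\<Sum>y\<in>X t0. q t0 (x(t0 := y)) * (\<Sum>z\<in>fib X G (G - S') (x(t0 := y)). \<Prod>t\<in>S'. q t z))"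
    proof (rule sum.cong[OF refl])
      fix y assume y: "y \<in> X t0"
      show "(\<Sum>z\<in>fib X G (G - S') (x(t0 := y)). \<Prod>t\<in>S. q t z)
           = q t0 (x(t0 := y)) * (\<Sum>z\<in>fib X G (G - S') (x(t0 := y)). \<Prod>t\<in>S'. q t z)"
        unfolding sum_distrib_left
      proof (rule sum.cong[OF refl])
        fix z assume z: "z \<in> fib X G (G - S') (x(t0 := y))"
        have "q t0 z = q t0 (x(t0 := y))"
        proof -
          have "\<forall>i\<in>insert t0 (par t0). z i = (x(t0 := y)) i"
          proof
            fix i assume i: "i \<in> insert t0 (par t0)"
            show "z i = (x(t0 := y)) i"
            proof (cases "i \<in> G")
              case True
              then have "i \<in> G - S'" using i part t0 unfolding S'_def by auto
              then show ?thesis using z unfolding fib_def by auto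
            next
              case False
              then have "i \<noteq> t0" using t0G by auto
              then show ?thesis using z False less.prems(4) unfolding fib_def by (auto simp: PiE_iff extensional_def)
            qed
          qed
          then show ?thesis using depD[OF less.prems(2)[OF t0(1)]] by blast
        qed
        moreover have "(\<Prod>t\<in>S. q t z) = q t0 z * (\<Prod>t\<in>S'. q t z)"
          unfolding S'_def using finS t0 by (simp add: prod.remove)
        ultimately show "(\<Prod>t\<in>S. q t z) = q t0 (x(t0 := y)) * (\<Prod>t\<in>S'. q t z)" by simp
      qed
    qed
    also have "\<dots> = (\<Sum>y\<in>X t0. q t0 (x(t0 := y)))"
    proof (rule sum.cong[OF refl])
      fix y assume y: "y \<in> X t0"
      have xy: "x(t0 := y) \<in> PiE G X" using less.prems(4) y t0G by (auto simp: PiE_iff extensional_def)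
      have "(\<Sum>z\<in>fib X G (G - S') (x(t0 := y)). \<Prod>t\<in>S'. q t z) = 1"
        apply (rule less.hyps[OF cardS'])
        using less.prems(1) apply (simp add: S'_def; blast)
        subgoal for t using less.prems(2)[of t] by (simp add: S'_def)
        subgoal for t z using less.prems(3)[of t z] by (simp add: S'_def)
        by (rule xy)
      then show "q t0 (x(t0 := y)) * (\<Sum>z\<in>fib X G (G - S') (x(t0 := y)). \<Prod>t\<in>S'. q t z) = q t0 (x(t0 := y))"
        by simp
    qed
    also have "\<dots> = 1" using less.prems(3)[OF t0(1) less.prems(4)] .
    finally show ?thesis .
  qed
qed



definition ac :: "'n set \<Rightarrow> ('n \<Rightarrow> 'n set) \<Rightarrow> 'n set \<Rightarrow> bool" where
  "ac G par S \<longleftrightarrow> S \<subseteq> G \<and> (\<forall>s\<in>S. par s \<subseteq> S)"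

lemma edges_iff: "(p, s) \<in> edges G par \<longleftrightarrow> s \<in> G \<and> p \<in> G \<and> p \<in> par s"
  unfolding edges_def by simp

lemma anc_mem:
  assumes ac: "ac G par S" and tr: "(a, t) \<in> (edges G par)\<^sup>+"
  shows "t \<in> S \<Longrightarrow> a \<in> S \<and> (a, t) \<in> (edges S par)\<^sup>+"
  using tr
proof (induction rule: trancl_induct)
  case (base y)
  then have "a \<in> par y" using edges_iff by fast
  then have "a \<in> S" using ac base(2) unfolding ac_def by blast
  then show ?case using base \<open>a \<in> par y\<close> by (simp add: edges_iff r_into_trancl')
next
  case (step y z)
  then have "y \<in> par z" using edges_iff by fast
  then have yS: "y \<in> S" using ac step(4) unfolding ac_def by blast
  then have "a \<in> S \<and> (a, y) \<in> (edges S par)\<^sup>+" using step(3) by blast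
  moreover have "(y, z) \<in> edges S par" using yS step(4) \<open>y \<in> par z\<close> by (simp add: edges_iff)
  ultimately show ?case by (meson trancl_into_trancl)
qed

lemma edges_mono: "S \<subseteq> G \<Longrightarrow> edges S par \<subseteq> edges G par"
  unfolding edges_def by auto

lemma trancl_edges_in: "(a, b) \<in> (edges S par)\<^sup>+ \<Longrightarrow> b \<in> S"
  by (induction rule: trancl_induct) (auto simp: edges_iff)

lemma desc_sub:
  assumes ac: "ac G par S" and s: "s \<in> S"
  shows "desc S par s = desc G par s \<inter> S"
proof (intro set_eqI iffI)
  fix v assume "v \<in> desc S par s"
  then have v: "(s, v) \<in> (edges S par)\<^sup>+" unfolding desc_def by simp
  have "S \<subseteq> G" using ac unfolding ac_def by auto
  then have "(s, v) \<in> (edges G par)\<^sup>+" using v trancl_mono edges_mono by blast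
  then show "v \<in> desc G par s \<inter> S" unfolding desc_def using trancl_edges_in[OF v] by simp
next
  fix v assume "v \<in> desc G par s \<inter> S"
  then show "v \<in> desc S par s" unfolding desc_def using anc_mem[OF ac] by blast
qed

lemma nondesc_sub:
  assumes ac: "ac G par S" and s: "s \<in> S"
  shows "nondesc S par s = nondesc G par s \<inter> S"
  using desc_sub[OF assms] ac unfolding nondesc_def ac_def by auto

lemma desc_G: "desc G par s \<subseteq> G"
  unfolding desc_def using trancl_edges_in by fast

lemma not_desc_self:
  assumes "acyclic (edges G par)"
  shows "s \<notin> desc G par s"
  using assms unfolding desc_def acyclic_def by simp

lemma par_nondesc:
  assumes acy: "acyclic (edges G par)" and s: "s \<in> G" and parG: "par s \<subseteq> G"
  shows "par s \<subseteq> nondesc G par s"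
proof
  fix p assume p: "p \<in> par s"
  then have e: "(p, s) \<in> edges G par" using s parG by (auto simp: edges_iff)
  have "p \<noteq> s" using e acy unfolding acyclic_def by blast
  moreover have "p \<notin> desc G par s"
  proof
    assume "p \<in> desc G par s"
    then have "(s, p) \<in> (edges G par)\<^sup>+" unfolding desc_def by simp
    then have "(s, s) \<in> (edges G par)\<^sup>+" using e by (meson trancl_into_trancl)
    then show False using acy unfolding acyclic_def by blast
  qed
  ultimately show "p \<in> nondesc G par s" unfolding nondesc_def using p parG by auto
qed

lemma par_nondesc2:
  assumes d: "d \<in> nondesc G par s" and parG: "par d \<subseteq> G"
  shows "par d \<subseteq> nondesc G par s"
proof
  fix p assume p: "p \<in> par d"
  have dG: "d \<in> G" "d \<noteq> s" "d \<notin> desc G par s" using d unfolding nondesc_def by auto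
  then have e: "(p, d) \<in> edges G par" using p parG by (auto simp: edges_iff)
  have "p \<noteq> s"
  proof
    assume "p = s"
    then have "d \<in> desc G par s" using e unfolding desc_def by auto
    then show False using dG by simp
  qed
  moreover have "p \<notin> desc G par s"
  proof
    assume "p \<in> desc G par s"
    then have "(s, d) \<in> (edges G par)\<^sup>+" using e unfolding desc_def by (meson trancl_into_trancl mem_Collect_eq)
    then show False using dG unfolding desc_def by simp
  qed
  ultimately show "p \<in> nondesc G par s" unfolding nondesc_def using p parG by auto
qed

lemma ac_disj_desc:
  assumes ac: "ac G par B" and "s \<notin> B"
  shows "B \<inter> desc G par s = {}"
  using anc_mem[OF ac] assms(2) unfolding desc_def by blast

lemma ac_in_nondesc:
  assumes ac: "ac G par B" and "s \<notin> B"
  shows "B \<subseteq> nondesc G par s"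
  using ac_disj_desc[OF assms] assms ac unfolding nondesc_def ac_def by auto



lemma conv_comb:
  fixes p :: "'i \<Rightarrow> 'v \<Rightarrow> real"
  assumes cv: "pw_convex C" and fin: "finite I"
    and w: "\<And>i. i \<in> I \<Longrightarrow> 0 \<le> w i" "sum w I = 1" and p: "\<And>i. i \<in> I \<Longrightarrow> p i \<in> C"
  shows "(\<lambda>y. \<Sum>i\<in>I. w i * p i y) \<in> C"
  using fin w p
proof (induction I arbitrary: w rule: finite_induct)
  case empty
  then show ?case by simp
next
  case (insert a I)
  have wa: "0 \<le> w a" using insert.prems by simp
  have sI: "0 \<le> sum w I" using insert.prems by (intro sum_nonneg) auto
  have tot: "w a + sum w I = 1" using insert.prems insert.hyps by simp
  show ?case
  proof (cases "sum w I = 0")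
    case True
    have z: "w i = 0" if "i \<in> I" for i
    proof -
      have "\<forall>i\<in>I. w i = 0" using True sum_nonneg_eq_0_iff[OF insert.hyps(1), of w] insert.prems(1) by simp
      then show ?thesis using that by blast
    qed
    have "w a = 1" using tot True by simp
    then have "(\<lambda>y. \<Sum>i\<in>insert a I. w i * p i y) = p a"
      using z insert.hyps by (auto simp: fun_eq_iff)
    then show ?thesis using insert.prems by simp
  next
    case False
    then have spos: "0 < sum w I" using sI by simp
    define w' where "w' i = w i / sum w I" for i
    have "(\<lambda>y. \<Sum>i\<in>I. w' i * p i y) \<in> C"
    proof (rule insert.IH)
      show "\<And>i. i \<in> I \<Longrightarrow> 0 \<le> w' i" unfolding w'_def using insert.prems spos by simp
      show "sum w' I = 1" unfolding w'_def using spos by (simp add: sum_divide_distrib[symmetric])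
      show "\<And>i. i \<in> I \<Longrightarrow> p i \<in> C" using insert.prems by simp
    qed
    moreover have "p a \<in> C" using insert.prems by simp
    ultimately have "(\<lambda>y. w a * p a y + (1 - w a) * (\<Sum>i\<in>I. w' i * p i y)) \<in> C"
    proof -
      have h: "\<forall>p\<in>C. \<forall>q\<in>C. \<forall>t::real. 0 \<le> t \<and> t \<le> 1 \<longrightarrow> (\<lambda>y. t * p y + (1 - t) * q y) \<in> C"
        using cv unfolding pw_convex_def .
      moreover have "0 \<le> w a \<and> w a \<le> 1" using wa tot sI by linarith
      show ?thesis
        by (rule h[rule_format, of "p a" "\<lambda>y. \<Sum>i\<in>I. w' i * p i y" "w a"])
          (use \<open>p a \<in> C\<close> \<open>(\<lambda>y. \<Sum>i\<in>I. w' i * p i y) \<in> C\<close> \<open>0 \<le> w a \<and> w a \<le> 1\<close> in auto)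
    qed
    moreover have "(\<lambda>y. w a * p a y + (1 - w a) * (\<Sum>i\<in>I. w' i * p i y)) = (\<lambda>y. \<Sum>i\<in>insert a I. w i * p i y)"
    proof
      fix y
      have "1 - w a = sum w I" using tot by simp
      then have "(1 - w a) * (\<Sum>i\<in>I. w' i * p i y) = (\<Sum>i\<in>I. w i * p i y)"
        using spos unfolding w'_def sum_distrib_left by (intro sum.cong) auto
      then show "w a * p a y + (1 - w a) * (\<Sum>i\<in>I. w' i * p i y) = (\<Sum>i\<in>insert a I. w i * p i y)"
        using insert.hyps by simp
    qed
    ultimately show ?thesis by simp
  qed
qed

definition marg :: "('n \<Rightarrow> 'v set) \<Rightarrow> 'n set \<Rightarrow> (('n \<Rightarrow> 'v) set \<Rightarrow> ('n \<Rightarrow> 'v) set \<Rightarrow> real) \<Rightarrow> 'n set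
   \<Rightarrow> ('n \<Rightarrow> 'v) set \<Rightarrow> ('n \<Rightarrow> 'v) set \<Rightarrow> real" where
  "marg X G P S A B = P {z \<in> PiE G X. restrict z S \<in> A} {z \<in> PiE G X. restrict z S \<in> B}"

lemma ext_exists:
  assumes ne: "\<And>i. i \<in> G \<Longrightarrow> X i \<noteq> {}" and S: "S \<subseteq> G" and u: "u \<in> PiE S X"
  shows "\<exists>z\<in>PiE G X. restrict z S = u"
proof -
  have "PiE G X \<noteq> {}" using ne by (simp add: PiE_eq_empty_iff)
  then obtain x0 where x0: "x0 \<in> PiE G X" by blast
  have "mrg S u x0 \<in> PiE G X" by (rule mrg_PiE[OF u x0 S])
  moreover have "restrict (mrg S u x0) S = u"
    using u unfolding mrg_def by (auto simp: PiE_iff extensional_def fun_eq_iff)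
  ultimately show ?thesis by blast
qed

lemma marg_fcp:
  assumes fc: "full_cond_prob (PiE G X) P" and ne: "\<And>i. i \<in> G \<Longrightarrow> X i \<noteq> {}" and S: "S \<subseteq> G"
  shows "full_cond_prob (PiE S X) (marg X G P S)"
proof -
  define pre where "pre A = {z \<in> PiE G X. restrict z S \<in> A}" for A
  have mp: "marg X G P S A B = P (pre A) (pre B)" for A B unfolding marg_def pre_def by simp
  have pre_sub: "pre A \<subseteq> PiE G X" for A unfolding pre_def by auto
  have pre_all: "pre (PiE S X) = PiE G X" unfolding pre_def using S by (auto simp: PiE_iff extensional_def)
  have pre_int: "pre (A \<inter> C) = pre A \<inter> pre C" for A C unfolding pre_def by auto
  have pre_un: "pre (A \<union> C) = pre A \<union> pre C" for A C unfolding pre_def by auto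
  have pre_disj: "A \<inter> C = {} \<Longrightarrow> pre A \<inter> pre C = {}" for A C unfolding pre_def by auto
  have pre_ne: "pre B \<noteq> {}" if "B \<subseteq> PiE S X" "B \<noteq> {}" for B
  proof -
    from that(2) obtain u where "u \<in> B" by blast
    have uS: "u \<in> PiE S X" using that \<open>u \<in> B\<close> by auto
    have "\<exists>z\<in>PiE G X. restrict z S = u" by (rule ext_exists[OF ne S uS])
    then obtain z where "z \<in> PiE G X" "restrict z S = u" by blast
    then show ?thesis unfolding pre_def using \<open>u \<in> B\<close> by auto
  qed
  show ?thesis
    unfolding full_cond_prob_def mp
  proof (intro conjI allI impI)
    fix B A assume B: "B \<subseteq> PiE S X" "B \<noteq> {}" and A: "A \<subseteq> PiE S X"
    show "0 \<le> P (pre A) (pre B)" using fcp_basic(1)[OF fc pre_sub pre_ne[OF B] pre_sub] .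
  next
    fix B assume B: "B \<subseteq> PiE S X" "B \<noteq> {}"
    show "P (pre (PiE S X)) (pre B) = 1" using fcp_basic(2)[OF fc pre_sub pre_ne[OF B]] pre_all by simp
  next
    fix B assume B: "B \<subseteq> PiE S X" "B \<noteq> {}"
    show "P (pre B) (pre B) = 1" using fcp_basic(3)[OF fc pre_sub pre_ne[OF B]] .
  next
    fix B A1 A2 assume B: "B \<subseteq> PiE S X" "B \<noteq> {}" and A: "A1 \<subseteq> PiE S X" "A2 \<subseteq> PiE S X" "A1 \<inter> A2 = {}"
    show "P (pre (A1 \<union> A2)) (pre B) = P (pre A1) (pre B) + P (pre A2) (pre B)"
      unfolding pre_un using fcp_basic(4)[OF fc pre_sub pre_ne[OF B] pre_sub pre_sub pre_disj[OF A(3)]] .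
  next
    fix A B C assume h: "A \<subseteq> PiE S X" "B \<subseteq> PiE S X" "C \<subseteq> PiE S X" "B \<noteq> {}" "C \<inter> B \<noteq> {}"
    have "pre C \<inter> pre B \<noteq> {}" using pre_ne[of "C \<inter> B"] h unfolding pre_int by auto
    then show "P (pre (A \<inter> C)) (pre B) = P (pre A) (pre (C \<inter> B)) * P (pre C) (pre B)"
      unfolding pre_int using fcp_F2[OF fc pre_sub pre_sub pre_sub pre_ne[OF h(2,4)]] by simp
  qed
qed

lemma restrict_eq_iff:
  assumes "x \<in> PiE V X"
  shows "restrict z V = x \<longleftrightarrow> (\<forall>i\<in>V. z i = x i)"
  using assms by (auto simp: PiE_iff extensional_def fun_eq_iff)

lemma marg_irr:
  assumes cn: "credal_network G par X M" and P: "P \<in> irr_ext G par X M" and ac: "ac G par S"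
  shows "marg X G P S \<in> irr_ext S par X M"
proof -
  have fc: "full_cond_prob (PiE G X) P" using P unfolding irr_ext_def by simp
  have ne: "\<And>i. i \<in> G \<Longrightarrow> X i \<noteq> {}" using cn unfolding credal_network_def by simp
  have SG: "S \<subseteq> G" using ac unfolding ac_def by simp
  have parG: "\<And>s. s \<in> G \<Longrightarrow> par s \<subseteq> G" using cn unfolding credal_network_def by simp
  have acy: "acyclic (edges G par)" using cn unfolding credal_network_def by simp
  have finG: "finite G" using cn unfolding credal_network_def by simp
  have finX: "\<And>i. i \<in> G \<Longrightarrow> finite (X i)" using cn unfolding credal_network_def by simp
  have irr: "\<And>s x. s \<in> G \<Longrightarrow> x \<in> PiE (nondesc G par s) X \<Longrightarrow>
     (\<lambda>y. P {z\<in>PiE G X. z s = y} {z\<in>PiE G X. restrict z (nondesc G par s) = x}) \<in> M s (restrict x (par s))"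
    using P unfolding irr_ext_def by simp
  have "\<forall>s\<in>S. \<forall>x\<in>PiE (nondesc S par s) X.
        (\<lambda>y. marg X G P S {z\<in>PiE S X. z s = y} {z\<in>PiE S X. restrict z (nondesc S par s) = x})
          \<in> M s (restrict x (par s))"
  proof (intro ballI)
    fix s x assume s: "s \<in> S" and x: "x \<in> PiE (nondesc S par s) X"
    have sG: "s \<in> G" using s SG by auto
    define W where "W = nondesc G par s"
    define V where "V = nondesc S par s"
    have VW: "V = W \<inter> S" unfolding V_def W_def using nondesc_sub[OF ac s] .
    have WG: "W \<subseteq> G" unfolding W_def nondesc_def by auto
    have parV: "par s \<subseteq> V" unfolding VW W_def using par_nondesc[OF acy sG parG[OF sG]] ac s
      unfolding ac_def by auto
    define Ay where "Ay y = {z\<in>PiE G X. z s = y}" for y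
    define Bx where "Bx = {z\<in>PiE G X. restrict z V = x}"
    define E where "E = {x' \<in> PiE W X. restrict x' V = x}"
    define Bp where "Bp x' = {z\<in>PiE G X. restrict z W = x'}" for x'
    have e1: "{z \<in> PiE G X. restrict z S \<in> {z\<in>PiE S X. z s = y}} = Ay y" for y
      unfolding Ay_def using s SG by (auto simp: PiE_iff)
    have e2: "{z \<in> PiE G X. restrict z S \<in> {z\<in>PiE S X. restrict z V = x}} = Bx"
      unfolding Bx_def using SG VW by (auto simp: PiE_iff)
    have sub_all: "Ay y \<subseteq> PiE G X" "Bx \<subseteq> PiE G X" "Bp x' \<subseteq> PiE G X" for y x'
      unfolding Ay_def Bx_def Bp_def by auto
    have Bx_ne: "Bx \<noteq> {}"
    proof -
      have VG: "V \<subseteq> G" using VW WG by auto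
      have "\<exists>z\<in>PiE G X. restrict z V = x" by (rule ext_exists[OF ne VG x[folded V_def]])
      then obtain z where "z \<in> PiE G X" "restrict z V = x" by blast
      then show ?thesis unfolding Bx_def by auto
    qed
    have Bp_ne: "Bp x' \<noteq> {}" if "x' \<in> E" for x'
    proof -
      have xW': "x' \<in> PiE W X" using that unfolding E_def by auto
      have "\<exists>z\<in>PiE G X. restrict z W = x'" by (rule ext_exists[OF ne WG xW'])
      then obtain z where "z \<in> PiE G X" "restrict z W = x'" by blast
      then show ?thesis unfolding Bp_def by auto
    qed
    have VsubW: "V \<subseteq> W" using VW by auto
    have Bp_sub: "Bp x' \<subseteq> Bx" if "x' \<in> E" for x'
    proof
      fix z assume "z \<in> Bp x'"
      then have "z \<in> PiE G X" "restrict z W = x'" unfolding Bp_def by auto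
      moreover have "restrict x' V = x" using that unfolding E_def by auto
      moreover have "restrict z V = restrict (restrict z W) V" using VsubW by (simp add: Int_absorb1 Int_absorb2)
      ultimately show "z \<in> Bx" unfolding Bx_def by simp
    qed
    have Bx_un: "Bx = (\<Union>x'\<in>E. Bp x')"
    proof (intro set_eqI iffI)
      fix z assume z: "z \<in> Bx"
      then have "restrict z W \<in> PiE W X" "restrict (restrict z W) V = x" unfolding Bx_def using VsubW WG
        by (auto simp: restrict_restrict PiE_iff Int_absorb1)
      then have "restrict z W \<in> E" unfolding E_def by simp
      then show "z \<in> (\<Union>x'\<in>E. Bp x')" unfolding Bp_def using z unfolding Bx_def by auto
    next
      fix z assume "z \<in> (\<Union>x'\<in>E. Bp x')"
      then show "z \<in> Bx" using Bp_sub by auto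
    qed
    have finE: "finite E"
    proof -
      have "finite W" using WG finG finite_subset by auto
      then have "finite (PiE W X)" using finX WG by (intro finite_PiE) auto
      then show ?thesis unfolding E_def by (rule rev_finite_subset) auto
    qed
    have disj: "Bp i \<inter> Bp j = {}" if "i \<noteq> j" for i j unfolding Bp_def using that by auto
    have w_sum: "(\<Sum>x'\<in>E. P (Bp x') Bx) = 1"
    proof -
      have "(\<Sum>x'\<in>E. P (Bp x') Bx) = P (\<Union>x'\<in>E. Bp x') Bx"
        by (rule fcp_sum[OF fc sub_all(2) Bx_ne finE, symmetric]) (simp_all add: sub_all(3) disj)
      also have "\<dots> = 1" by (simp only: Bx_un[symmetric] fcp_basic(3)[OF fc sub_all(2) Bx_ne])
      finally show ?thesis .
    qed
    have main: "P (Ay y) Bx = (\<Sum>x'\<in>E. P (Bp x') Bx * P (Ay y) (Bp x'))" for y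
    proof -
      have BB: "Bx \<inter> Bx \<noteq> {}" using Bx_ne by simp
      have f2: "P (Ay y \<inter> Bx) Bx = P (Ay y) (Bx \<inter> Bx) * P Bx Bx"
        by (rule fcp_F2[OF fc sub_all(1) sub_all(2) sub_all(2) Bx_ne BB])
      have "P (Ay y) Bx = P (Ay y \<inter> Bx) Bx"
        unfolding f2 Int_absorb fcp_basic(3)[OF fc sub_all(2) Bx_ne] by simp
      also have eqU: "Ay y \<inter> Bx = (\<Union>x'\<in>E. Ay y \<inter> Bp x')"
      proof -
        have "Ay y \<inter> Bx = Ay y \<inter> (\<Union>x'\<in>E. Bp x')" using Bx_un by (rule arg_cong)
        also have "\<dots> = (\<Union>x'\<in>E. Ay y \<inter> Bp x')" by (rule Int_UN_distrib)
        finally show ?thesis .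
      qed
      also have "P (\<Union>x'\<in>E. Ay y \<inter> Bp x') Bx = (\<Sum>x'\<in>E. P (Ay y \<inter> Bp x') Bx)"
        apply (rule fcp_sum[OF fc sub_all(2) Bx_ne finE])
        subgoal for i using sub_all(1)[of y] by blast
        subgoal for i j using disj[of i j] by blast
        done
      also have "\<dots> = (\<Sum>x'\<in>E. P (Bp x') Bx * P (Ay y) (Bp x'))"
      proof (rule sum.cong[OF refl])
        fix x' assume x': "x' \<in> E"
        have "Bp x' \<inter> Bx = Bp x'" using Bp_sub[OF x'] by auto
        then show "P (Ay y \<inter> Bp x') Bx = P (Bp x') Bx * P (Ay y) (Bp x')"
          using fcp_F2[OF fc sub_all(1) sub_all(2) sub_all(3) Bx_ne] Bp_ne[OF x'] by simp
      qed
      finally show ?thesis .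
    qed
    have xpar: "restrict x (par s) \<in> PiE (par s) X" using x parV unfolding V_def by (auto simp: PiE_iff)
    have cv: "pw_convex (M s (restrict x (par s)))"
      using cn sG xpar unfolding credal_network_def by blast
    have inM: "(\<lambda>y. P (Ay y) (Bp x')) \<in> M s (restrict x (par s))" if x': "x' \<in> E" for x'
    proof -
      have xW: "x' \<in> PiE W X" using x' unfolding E_def by auto
      have "restrict x' (par s) = restrict x (par s)"
      proof -
        have e: "restrict x' V = x" using x' unfolding E_def by auto
        show ?thesis unfolding e[symmetric] using parV by (simp add: Int_absorb1)
      qed
      then show ?thesis using irr[OF sG xW[unfolded W_def]] unfolding Ay_def Bp_def W_def by simp
    qed
    have "(\<lambda>y. \<Sum>x'\<in>E. P (Bp x') Bx * P (Ay y) (Bp x')) \<in> M s (restrict x (par s))"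
      apply (rule conv_comb[OF cv finE, where w="\<lambda>x'. P (Bp x') Bx" and p="\<lambda>x' y. P (Ay y) (Bp x')"])
      using fcp_basic(1)[OF fc sub_all(2) Bx_ne sub_all(3)] w_sum inM by auto
    then show "(\<lambda>y. marg X G P S {z\<in>PiE S X. z s = y} {z\<in>PiE S X. restrict z (nondesc S par s) = x})
          \<in> M s (restrict x (par s))"
      unfolding marg_def e1 V_def[symmetric] e2 main .
  qed
  then show ?thesis unfolding irr_ext_def using marg_fcp[OF fc ne SG] by simp
qed

lemma marg_expect:
  assumes fc: "full_cond_prob (PiE G X) P" and ne: "\<And>i. i \<in> G \<Longrightarrow> X i \<noteq> {}" and S: "S \<subseteq> G"
    and finG: "finite G" and finX: "\<And>i. i \<in> G \<Longrightarrow> finite (X i)"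
  shows "(\<Sum>z\<in>PiE G X. g (restrict z S) * P {z} (PiE G X)) = (\<Sum>u\<in>PiE S X. g u * marg X G P S {u} (PiE S X))"
proof -
  have fG: "finite (PiE G X)" using finG finX by (intro finite_PiE) auto
  have fS: "finite (PiE S X)" using finG finX S finite_subset by (intro finite_PiE) auto
  have Gne: "PiE G X \<noteq> {}" using ne by (simp add: PiE_eq_empty_iff)
  have pre_all: "{z \<in> PiE G X. restrict z S \<in> PiE S X} = PiE G X" using S by (auto simp: PiE_iff extensional_def)
  have "(\<Sum>z\<in>PiE G X. g (restrict z S) * P {z} (PiE G X))
      = (\<Sum>u\<in>PiE S X. \<Sum>z\<in>{z \<in> PiE G X. restrict z S = u}. g (restrict z S) * P {z} (PiE G X))"
    using fG fS S by (intro sum.group[symmetric]) (auto simp: PiE_iff extensional_def)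
  also have "\<dots> = (\<Sum>u\<in>PiE S X. g u * marg X G P S {u} (PiE S X))"
  proof (rule sum.cong[OF refl])
    fix u assume u: "u \<in> PiE S X"
    have "marg X G P S {u} (PiE S X) = P {z \<in> PiE G X. restrict z S = u} (PiE G X)"
      unfolding marg_def pre_all by simp
    also have "\<dots> = (\<Sum>z\<in>{z \<in> PiE G X. restrict z S = u}. P {z} (PiE G X))"
      using fG Gne by (intro fcp_point_sum[OF fc]) auto
    finally show "(\<Sum>z\<in>{z \<in> PiE G X. restrict z S = u}. g (restrict z S) * P {z} (PiE G X)) = g u * marg X G P S {u} (PiE S X)"
      by (simp add: sum_distrib_left)
  qed
  finally show ?thesis .
qed



lemma nondesc_split:
  assumes s: "s \<in> G"
  shows "G = nondesc G par s \<union> {s} \<union> desc G par s" "s \<notin> nondesc G par s"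
    "nondesc G par s \<inter> desc G par s = {}" "nondesc G par s \<subseteq> G"
  using s desc_G[of G par s] unfolding nondesc_def by auto

lemma block_sum:
  fixes g C :: "('n \<Rightarrow> 'v) \<Rightarrow> real" and q :: "'n \<Rightarrow> ('n \<Rightarrow> 'v) \<Rightarrow> real"
  assumes finG: "finite G" and finX: "\<And>i. i \<in> G \<Longrightarrow> finite (X i)" and acy: "acyclic (edges G par)"
    and B: "B \<subseteq> G" and T': "T' \<subseteq> G" "G - T' = U \<union> B"
    and V: "U \<subseteq> V" "V \<subseteq> U \<union> B"
    and Cdep: "dep C U"
    and qdep: "\<And>d. d \<in> T' \<Longrightarrow> dep (q d) (insert d (par d))"
    and qnorm: "\<And>d z. d \<in> T' \<Longrightarrow> z \<in> PiE G X \<Longrightarrow> (\<Sum>y\<in>X d. q d (z(d := y))) = 1"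
    and x: "x \<in> PiE G X"
  shows "(\<Sum>z\<in>fib X G V x. g (restrict z B) * C z * (\<Prod>d\<in>T'. q d z))
       = C x * (\<Sum>u\<in>fib X B (V \<inter> B) x. g u)"
proof -
  have "(\<Sum>z\<in>fib X G V x. g (restrict z B) * C z * (\<Prod>d\<in>T'. q d z))
      = (\<Sum>u\<in>fib X B (V \<inter> B) x. \<Sum>z\<in>fib X G (V \<union> B) (mrg B u x). g (restrict z B) * C z * (\<Prod>d\<in>T'. q d z))"
    by (rule sum_marg[OF finG finX B])
  also have "\<dots> = (\<Sum>u\<in>fib X B (V \<inter> B) x. C x * g u)"
  proof (rule sum.cong[OF refl])
    fix u assume u: "u \<in> fib X B (V \<inter> B) x"
    have uP: "u \<in> PiE B X" using u unfolding fib_def by simp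
    have mP: "mrg B u x \<in> PiE G X" by (rule mrg_PiE[OF uP x B])
    have VB: "V \<union> B = G - T'" using V T' by auto
    have inner: "(\<Sum>z\<in>fib X G (V \<union> B) (mrg B u x). \<Prod>d\<in>T'. q d z) = 1"
      unfolding VB by (rule sum1[OF finG finX acy T'(1) qdep qnorm mP])
    have "(\<Sum>z\<in>fib X G (V \<union> B) (mrg B u x). g (restrict z B) * C z * (\<Prod>d\<in>T'. q d z))
        = (\<Sum>z\<in>fib X G (V \<union> B) (mrg B u x). (C x * g u) * (\<Prod>d\<in>T'. q d z))"
    proof (rule sum.cong[OF refl])
      fix z assume z: "z \<in> fib X G (V \<union> B) (mrg B u x)"
      have zi: "\<And>i. i \<in> V \<union> B \<Longrightarrow> z i = mrg B u x i" using z unfolding fib_def by blast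
      have zP: "z \<in> PiE G X" using z unfolding fib_def by blast
      have "restrict z B = u"
      proof (rule ext)
        fix i show "restrict z B i = u i"
        proof (cases "i \<in> B")
          case True then show ?thesis using zi[of i] unfolding mrg_def by simp
        next
          case False then show ?thesis using uP by (simp add: PiE_iff extensional_def)
        qed
      qed
      moreover have "C z = C x"
      proof (rule depD[OF Cdep])
        fix i assume i: "i \<in> U"
        then have "z i = mrg B u x i" using zi V by blast
        moreover have "mrg B u x i = x i"
        proof (cases "i \<in> B")
          case True
          then have "i \<in> V \<inter> B" using i V by blast
          then show ?thesis using u True unfolding fib_def mrg_def by simp
        next
          case False then show ?thesis unfolding mrg_def by simp
        qed
        ultimately show "z i = x i" by simp
      qed
      ultimately show "g (restrict z B) * C z * (\<Prod>d\<in>T'. q d z) = (C x * g u) * (\<Prod>d\<in>T'. q d z)"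
        by simp
    qed
    also have "\<dots> = C x * g u" unfolding sum_distrib_left[symmetric] inner by simp
    finally show "(\<Sum>z\<in>fib X G (V \<union> B) (mrg B u x). g (restrict z B) * C z * (\<Prod>d\<in>T'. q d z)) = C x * g u" .
  qed
  also have "\<dots> = C x * (\<Sum>u\<in>fib X B (V \<inter> B) x. g u)" by (simp add: sum_distrib_left)
  finally show ?thesis .
qed



lemma block_lemma:
  fixes g C :: "('n \<Rightarrow> 'v) \<Rightarrow> real" and q :: "'n \<Rightarrow> ('n \<Rightarrow> 'v) \<Rightarrow> real"
  assumes finG: "finite G" and finX: "\<And>i. i \<in> G \<Longrightarrow> finite (X i)" and acy: "acyclic (edges G par)"
    and B: "B \<subseteq> G" "s \<in> B" and Dd: "Dset \<subseteq> G" "Dset \<inter> B = {}" "desc G par s \<subseteq> B \<union> Dset"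
    and Cdep: "dep C (nondesc G par s)" and Cpos: "0 < C x"
    and qdep: "\<And>d. d \<in> Dset \<inter> desc G par s \<Longrightarrow> dep (q d) (insert d (par d))"
    and qnorm: "\<And>d z. d \<in> Dset \<inter> desc G par s \<Longrightarrow> z \<in> PiE G X \<Longrightarrow> (\<Sum>y\<in>X d. q d (z(d := y))) = 1"
    and x: "x \<in> PiE G X" and y: "y \<in> X s"
  shows "cp (\<lambda>z. g (restrict z B) * C z * (\<Prod>d\<in>Dset \<inter> desc G par s. q d z))
            {z \<in> PiE G X. z s = y} (fib X G (nondesc G par s) x)
       = cp g {u \<in> PiE B X. u s = y} (fib X B (nondesc G par s \<inter> B) x)"
proof -
  define U where "U = nondesc G par s"
  define T' where "T' = Dset \<inter> desc G par s"
  have sG: "s \<in> G" using B by auto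
  note spl = nondesc_split[OF sG, of par, folded U_def]
  have T'G: "T' \<subseteq> G" unfolding T'_def using Dd by auto
  have GT: "G - T' = U \<union> B"
  proof
    show "G - T' \<subseteq> U \<union> B"
    proof
      fix i assume i: "i \<in> G - T'"
      then have "i \<in> U \<or> i = s \<or> i \<in> desc G par s" using spl(1) by blast
      then show "i \<in> U \<union> B" using i B Dd unfolding T'_def by blast
    qed
    show "U \<union> B \<subseteq> G - T'" using spl B Dd unfolding T'_def by blast
  qed
  have xy: "x(s := y) \<in> PiE G X" using x y sG by (auto simp: PiE_iff extensional_def)
  have Cxy: "C (x(s := y)) = C x"
    by (rule depD[OF Cdep[folded U_def]]) (use spl(2) in auto)
  define w where "w z = g (restrict z B) * C z * (\<Prod>d\<in>T'. q d z)" for z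
  have num_set: "{z \<in> PiE G X. z s = y} \<inter> fib X G U x = fib X G (insert s U) (x(s := y))"
    unfolding fib_def using spl(2) by auto
  have num_set2: "{u \<in> PiE B X. u s = y} \<inter> fib X B (U \<inter> B) x = fib X B (insert s U \<inter> B) (x(s := y))"
    unfolding fib_def using spl(2) B by auto
  have s1: "sum w (fib X G (insert s U) (x(s := y))) = C x * sum g (fib X B (insert s U \<inter> B) (x(s := y)))"
    unfolding w_def Cxy[symmetric]
    by (rule block_sum[OF finG finX acy B(1) T'G GT _ _ Cdep[folded U_def] qdep[folded T'_def] qnorm[folded T'_def] xy])
      (use B in auto)
  have s2: "sum w (fib X G U x) = C x * sum g (fib X B (U \<inter> B) x)"
    unfolding w_def
    by (rule block_sum[OF finG finX acy B(1) T'G GT _ _ Cdep[folded U_def] qdep[folded T'_def] qnorm[folded T'_def] x])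
      auto
  show ?thesis
    unfolding cp_def U_def[symmetric] T'_def[symmetric] w_def[symmetric] num_set num_set2 s1 s2
    using Cpos by simp
qed



lemma dnode_lemma:
  fixes C :: "('n \<Rightarrow> 'v) \<Rightarrow> real" and q :: "'n \<Rightarrow> ('n \<Rightarrow> 'v) \<Rightarrow> real"
  assumes finG: "finite G" and finX: "\<And>i. i \<in> G \<Longrightarrow> finite (X i)" and acy: "acyclic (edges G par)"
    and sG: "s \<in> G" and parG: "par s \<subseteq> G"
    and Cdep: "dep C (nondesc G par s)" and Cpos: "0 < C x"
    and qdep: "\<And>d. d \<in> insert s (desc G par s) \<Longrightarrow> dep (q d) (insert d (par d))"
    and qnorm: "\<And>d z. d \<in> insert s (desc G par s) \<Longrightarrow> z \<in> PiE G X \<Longrightarrow> (\<Sum>y\<in>X d. q d (z(d := y))) = 1"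
    and x: "x \<in> PiE G X" and y: "y \<in> X s"
  shows "cp (\<lambda>z. C z * q s z * (\<Prod>d\<in>desc G par s. q d z))
            {z \<in> PiE G X. z s = y} (fib X G (nondesc G par s) x) = q s (x(s := y))"
proof -
  define U where "U = nondesc G par s"
  define T where "T = desc G par s"
  note spl = nondesc_split[OF sG, of par, folded U_def T_def]
  have parU: "par s \<subseteq> U" unfolding U_def by (rule par_nondesc[OF acy sG parG])
  have TG: "T \<subseteq> G" unfolding T_def by (rule desc_G)
  have sT: "s \<notin> T" unfolding T_def by (rule not_desc_self[OF acy])
  have GT: "G - T = insert s U" using spl sT by auto
  define w where "w z = C z * q s z * (\<Prod>d\<in>T. q d z)" for z
  have piece: "sum w (fib X G (insert s U) (x(s := y'))) = C x * q s (x(s := y'))" if y': "y' \<in> X s" for y'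
  proof -
    have xy: "x(s := y') \<in> PiE G X" using x y' sG by (auto simp: PiE_iff extensional_def)
    have "sum w (fib X G (insert s U) (x(s := y'))) = (\<Sum>z\<in>fib X G (insert s U) (x(s := y')). (C x * q s (x(s := y'))) * (\<Prod>d\<in>T. q d z))"
    proof (rule sum.cong[OF refl])
      fix z assume z: "z \<in> fib X G (insert s U) (x(s := y'))"
      have zi: "\<And>i. i \<in> insert s U \<Longrightarrow> z i = (x(s := y')) i" using z unfolding fib_def by blast
      have zP: "z \<in> PiE G X" using z unfolding fib_def by blast
      have "C z = C x"
        by (rule depD[OF Cdep[folded U_def]]) (use zi spl(2) in force)
      moreover have "q s z = q s (x(s := y'))"
      proof (rule depD[OF qdep[of s]])
        show "s \<in> insert s (desc G par s)" by simp
        fix i assume "i \<in> insert s (par s)"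
        then have "i \<in> insert s U" using parU by blast
        then show "z i = (x(s := y')) i" by (rule zi)
      qed
      ultimately show "w z = (C x * q s (x(s := y'))) * (\<Prod>d\<in>T. q d z)" unfolding w_def by simp
    qed
    also have "\<dots> = (C x * q s (x(s := y'))) * (\<Sum>z\<in>fib X G (G - T) (x(s := y')). \<Prod>d\<in>T. q d z)"
      unfolding GT sum_distrib_left by simp
    also have "(\<Sum>z\<in>fib X G (G - T) (x(s := y')). \<Prod>d\<in>T. q d z) = 1"
      by (rule sum1[OF finG finX acy TG]) (use qdep qnorm xy in \<open>auto simp: T_def\<close>)
    finally show ?thesis by (simp only: mult_1_right)
  qed
  have num_set: "{z \<in> PiE G X. z s = y} \<inter> fib X G U x = fib X G (insert s U) (x(s := y))"
    unfolding fib_def using spl(2) by auto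
  have den: "sum w (fib X G U x) = C x"
  proof -
    have "sum w (fib X G U x) = (\<Sum>y'\<in>X s. sum w (fib X G (insert s U) (x(s := y'))))"
      by (rule sum_split1[OF finG finX sG spl(2)])
    also have "\<dots> = (\<Sum>y'\<in>X s. C x * q s (x(s := y')))" by (rule sum.cong[OF refl]) (rule piece)
    also have "\<dots> = C x * (\<Sum>y'\<in>X s. q s (x(s := y')))" by (simp add: sum_distrib_left)
    also have "(\<Sum>y'\<in>X s. q s (x(s := y'))) = 1" by (rule qnorm[OF _ x]) simp
    finally show ?thesis by simp
  qed
  show ?thesis
    unfolding cp_def U_def[symmetric] T_def[symmetric] w_def[symmetric] num_set den piece[OF y]
    using Cpos by simp
qed



lemma fib_empty: "fib X W {} x = PiE W X" unfolding fib_def by simp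

lemma expect_lemma:
  fixes F r1 r2 :: "('n \<Rightarrow> 'v) \<Rightarrow> real" and q :: "'n \<Rightarrow> ('n \<Rightarrow> 'v) \<Rightarrow> real"
  assumes finG: "finite G" and finX: "\<And>i. i \<in> G \<Longrightarrow> finite (X i)" and acy: "acyclic (edges G par)"
    and B: "B1 \<subseteq> G" "B2 \<subseteq> G" "B1 \<inter> B2 = {}" and Dd: "Dset \<subseteq> G" "G - Dset = B1 \<union> B2"
    and qdep: "\<And>d. d \<in> Dset \<Longrightarrow> dep (q d) (insert d (par d))"
    and qnorm: "\<And>d z. d \<in> Dset \<Longrightarrow> z \<in> PiE G X \<Longrightarrow> (\<Sum>y\<in>X d. q d (z(d := y))) = 1"
    and x0: "x0 \<in> PiE G X"
  shows "(\<Sum>z\<in>PiE G X. F (restrict z B1) * (r1 (restrict z B1) * r2 (restrict z B2) * (\<Prod>d\<in>Dset. q d z)))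
       = (\<Sum>v\<in>PiE B2 X. r2 v) * (\<Sum>u\<in>PiE B1 X. F u * r1 u)"
proof -
  have "(\<Sum>z\<in>PiE G X. F (restrict z B1) * (r1 (restrict z B1) * r2 (restrict z B2) * (\<Prod>d\<in>Dset. q d z)))
      = (\<Sum>z\<in>fib X G {} x0. F (restrict z B1) * (r1 (restrict z B1) * r2 (restrict z B2) * (\<Prod>d\<in>Dset. q d z)))"
    by (simp add: fib_empty)
  also have "\<dots> = (\<Sum>u\<in>fib X B1 ({} \<inter> B1) x0. \<Sum>z\<in>fib X G ({} \<union> B1) (mrg B1 u x0).
        F (restrict z B1) * (r1 (restrict z B1) * r2 (restrict z B2) * (\<Prod>d\<in>Dset. q d z)))"
    by (rule sum_marg[OF finG finX B(1)])
  also have "\<dots> = (\<Sum>u\<in>PiE B1 X. F u * r1 u * (\<Sum>v\<in>PiE B2 X. r2 v))"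
  proof (rule sum.cong)
    show "fib X B1 ({} \<inter> B1) x0 = PiE B1 X" by (simp add: fib_empty)
  next
    fix u assume u: "u \<in> PiE B1 X"
    have mP: "mrg B1 u x0 \<in> PiE G X" by (rule mrg_PiE[OF u x0 B(1)])
    have "(\<Sum>z\<in>fib X G ({} \<union> B1) (mrg B1 u x0).
        F (restrict z B1) * (r1 (restrict z B1) * r2 (restrict z B2) * (\<Prod>d\<in>Dset. q d z)))
      = (\<Sum>z\<in>fib X G B1 (mrg B1 u x0). (F u * r1 u) * (r2 (restrict z B2) * (\<lambda>_. 1) z * (\<Prod>d\<in>Dset. q d z)))"
    proof (rule sum.cong)
      fix z assume z: "z \<in> fib X G B1 (mrg B1 u x0)"
      have "restrict z B1 = u"
      proof (rule ext)
        fix i show "restrict z B1 i = u i"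
        proof (cases "i \<in> B1")
          case True then show ?thesis using z unfolding fib_def mrg_def by simp
        next
          case False then show ?thesis using u by (simp add: PiE_iff extensional_def)
        qed
      qed
      then show "F (restrict z B1) * (r1 (restrict z B1) * r2 (restrict z B2) * (\<Prod>d\<in>Dset. q d z))
          = (F u * r1 u) * (r2 (restrict z B2) * (\<lambda>_. 1) z * (\<Prod>d\<in>Dset. q d z))" by simp
    qed simp
    also have "\<dots> = (F u * r1 u) * (\<Sum>z\<in>fib X G B1 (mrg B1 u x0). r2 (restrict z B2) * (\<lambda>_. 1) z * (\<Prod>d\<in>Dset. q d z))"
      by (simp add: sum_distrib_left)
    also have "(\<Sum>z\<in>fib X G B1 (mrg B1 u x0). r2 (restrict z B2) * (\<lambda>_. 1) z * (\<Prod>d\<in>Dset. q d z))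
        = (\<lambda>_. 1) (mrg B1 u x0) * (\<Sum>v\<in>fib X B2 (B1 \<inter> B2) (mrg B1 u x0). r2 v)"
      by (rule block_sum[OF finG finX acy B(2) Dd(1) Dd(2) _ _ _ qdep qnorm mP]) (auto simp: dep_def)
    also have "fib X B2 (B1 \<inter> B2) (mrg B1 u x0) = PiE B2 X" using B(3) by (simp add: fib_empty)
    finally show "(\<Sum>z\<in>fib X G ({} \<union> B1) (mrg B1 u x0).
        F (restrict z B1) * (r1 (restrict z B1) * r2 (restrict z B2) * (\<Prod>d\<in>Dset. q d z)))
      = F u * r1 u * (\<Sum>v\<in>PiE B2 X. r2 v)" by (simp add: restrict_def)
  qed
  also have "\<dots> = (\<Sum>v\<in>PiE B2 X. r2 v) * (\<Sum>u\<in>PiE B1 X. F u * r1 u)"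
    by (simp add: sum_distrib_left sum_distrib_right mult.commute mult.left_commute)
  finally show ?thesis .
qed



lemma cn_facts:
  assumes cn: "credal_network G par X M"
  shows "finite G" "\<And>i. i \<in> G \<Longrightarrow> finite (X i)" "\<And>i. i \<in> G \<Longrightarrow> X i \<noteq> {}"
    "acyclic (edges G par)" "\<And>s. s \<in> G \<Longrightarrow> par s \<subseteq> G"
  using cn unfolding credal_network_def by auto

lemma not_par_self:
  assumes acy: "acyclic (edges G par)" and d: "d \<in> G"
  shows "d \<notin> par d"
proof
  assume "d \<in> par d"
  then have "(d, d) \<in> edges G par" using d by (simp add: edges_iff)
  then show False using acy unfolding acyclic_def by blast
qed

lemma prod_split_desc:
  assumes s: "s \<notin> Dset" and DG: "Dset \<subseteq> G" and sG: "s \<in> G" and finG: "finite G"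
  shows "(\<Prod>d\<in>Dset. q d z) = (\<Prod>d\<in>Dset \<inter> nondesc G par s. q d z) * (\<Prod>d\<in>Dset \<inter> desc G par s. q d z)"
proof -
  have e: "Dset = (Dset \<inter> nondesc G par s) \<union> (Dset \<inter> desc G par s)"
    using s DG nondesc_split(1)[OF sG, of par] by blast
  have d: "(Dset \<inter> nondesc G par s) \<inter> (Dset \<inter> desc G par s) = {}"
    using nondesc_split(3)[OF sG, of par] by blast
  have f: "finite Dset" using DG finG finite_subset by auto
  have "(\<Prod>d\<in>Dset. q d z) = (\<Prod>d\<in>(Dset \<inter> nondesc G par s) \<union> (Dset \<inter> desc G par s). q d z)"
    using e by simp
  also have "\<dots> = (\<Prod>d\<in>Dset \<inter> nondesc G par s. q d z) * (\<Prod>d\<in>Dset \<inter> desc G par s. q d z)"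
    by (rule prod.union_disjoint) (use f d in auto)
  finally show ?thesis .
qed

lemma dep_prod_nondesc:
  assumes qdep: "\<And>d. d \<in> Dset \<Longrightarrow> dep (q d) (insert d (par d))"
    and parG: "\<And>d. d \<in> G \<Longrightarrow> par d \<subseteq> G" and DG: "Dset \<subseteq> G"
  shows "dep (\<lambda>z. \<Prod>d\<in>Dset \<inter> nondesc G par s. q d z) (nondesc G par s)"
  unfolding dep_def
proof (intro allI impI)
  fix z z' :: "'a \<Rightarrow> 'b" assume h: "\<forall>i\<in>nondesc G par s. z i = z' i"
  show "(\<Prod>d\<in>Dset \<inter> nondesc G par s. q d z) = (\<Prod>d\<in>Dset \<inter> nondesc G par s. q d z')"
  proof (rule prod.cong[OF refl])
    fix d assume d: "d \<in> Dset \<inter> nondesc G par s"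
    have "par d \<subseteq> nondesc G par s" using par_nondesc2[of d G par s] d parG DG by blast
    then have "insert d (par d) \<subseteq> nondesc G par s" using d by blast
    then show "q d z = q d z'" using depD[OF qdep[of d]] d h by blast
  qed
qed

lemma dep_restrict:
  assumes "B \<subseteq> U"
  shows "dep (\<lambda>z. g (restrict z B)) U"
  unfolding dep_def
proof (intro allI impI)
  fix z z' :: "'a \<Rightarrow> 'b" assume "\<forall>i\<in>U. z i = z' i"
  then have "restrict z B = restrict z' B" using assms by (auto simp: restrict_def fun_eq_iff)
  then show "g (restrict z B) = g (restrict z' B)" by simp
qed

lemma dep_mult:
  assumes "dep F U" "dep H U"
  shows "dep (\<lambda>z. F z * H z) U"
  using assms unfolding dep_def by metis

lemma restrict_PiE_sub: "z \<in> PiE G X \<Longrightarrow> B \<subseteq> G \<Longrightarrow> restrict z B \<in> PiE B X"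
  by (auto simp: PiE_iff)



lemma block_case:
  fixes w g' :: "nat \<Rightarrow> ('n \<Rightarrow> 'v) \<Rightarrow> real" and q :: "nat \<Rightarrow> 'n \<Rightarrow> ('n \<Rightarrow> 'v) \<Rightarrow> real" and e :: "nat \<Rightarrow> real"
  assumes cn: "credal_network G par X M"
    and ac1: "ac G par Ba" and ac2: "ac G par Bb" and disj: "Ba \<inter> Bb = {}"
    and Dset: "Dset = G - Ba - Bb"
    and fca: "full_cond_prob (PiE Ba X) Qa"
    and e: "\<And>n. 0 < e n" "e \<longlonglongrightarrow> 0"
    and wdef: "\<And>n z. w n z = rw (PiE Ba X) Qa (e n) (restrict z Ba) * g' n (restrict z Bb) * (\<Prod>d\<in>Dset. q n d z)"
    and g'pos: "\<And>n v. v \<in> PiE Bb X \<Longrightarrow> 0 < g' n v"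
    and qdep: "\<And>n d. d \<in> Dset \<Longrightarrow> dep (q n d) (insert d (par d))"
    and qnorm: "\<And>n d z. d \<in> Dset \<Longrightarrow> z \<in> PiE G X \<Longrightarrow> (\<Sum>y\<in>X d. q n d (z(d := y))) = 1"
    and qpos: "\<And>n d z. d \<in> Dset \<Longrightarrow> z \<in> PiE G X \<Longrightarrow> 0 < q n d z"
    and s: "s \<in> Ba" and x: "x \<in> PiE G X" and y: "y \<in> X s"
  shows "(\<lambda>n. cp (w n) {z \<in> PiE G X. z s = y} (fib X G (nondesc G par s) x))
     \<longlonglongrightarrow> Qa {u \<in> PiE Ba X. u s = y} (fib X Ba (nondesc G par s \<inter> Ba) x)"
proof -
  note cf = cn_facts[OF cn]
  define U where "U = nondesc G par s"
  have BaG: "Ba \<subseteq> G" and BbG: "Bb \<subseteq> G" using ac1 ac2 unfolding ac_def by auto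
  have sG: "s \<in> G" using s BaG by auto
  have sD: "s \<notin> Dset" using s Dset by auto
  have DG: "Dset \<subseteq> G" using Dset by auto
  have sBb: "s \<notin> Bb" using s disj by auto
  have BbU: "Bb \<subseteq> U" unfolding U_def by (rule ac_in_nondesc[OF ac2 sBb])
  have descD: "desc G par s \<subseteq> Ba \<union> Dset"
    using ac_disj_desc[OF ac2 sBb] desc_G[of G par s] Dset by blast
  define C where "C n z = g' n (restrict z Bb) * (\<Prod>d\<in>Dset \<inter> U. q n d z)" for n z
  have weq: "w n = (\<lambda>z. rw (PiE Ba X) Qa (e n) (restrict z Ba) * C n z * (\<Prod>d\<in>Dset \<inter> desc G par s. q n d z))" for n
  proof
    fix z
    show "w n z = rw (PiE Ba X) Qa (e n) (restrict z Ba) * C n z * (\<Prod>d\<in>Dset \<inter> desc G par s. q n d z)"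
      unfolding wdef C_def U_def prod_split_desc[OF sD DG sG cf(1), of "q n" z par] by (simp add: mult.assoc)
  qed
  have Cdep: "dep (C n) U" for n
    unfolding C_def
    by (rule dep_mult[OF dep_restrict[OF BbU]]) (unfold U_def, rule dep_prod_nondesc[OF qdep cf(5) DG])
  have Cpos: "0 < C n x" for n
  proof -
    have "0 < g' n (restrict x Bb)" using g'pos restrict_PiE_sub[OF x BbG] by blast
    moreover have "0 < (\<Prod>d\<in>Dset \<inter> U. q n d x)" using qpos[OF _ x] by (intro prod_pos) auto
    ultimately show ?thesis unfolding C_def by simp
  qed
  have eqn: "cp (w n) {z \<in> PiE G X. z s = y} (fib X G U x)
      = cp (rw (PiE Ba X) Qa (e n)) {u \<in> PiE Ba X. u s = y} (fib X Ba (U \<inter> Ba) x)" for n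
  proof -
    have DBa: "Dset \<inter> Ba = {}" using Dset by auto
    have qd: "dep (q n d) (insert d (par d))" if "d \<in> Dset \<inter> desc G par s" for d
      using qdep that by blast
    have qn: "(\<Sum>y\<in>X d. q n d (z(d := y))) = 1" if "d \<in> Dset \<inter> desc G par s" "z \<in> PiE G X" for d z
      using qnorm that by blast
    show ?thesis unfolding weq U_def
      by (rule block_lemma[OF cf(1) cf(2) cf(4) BaG s DG DBa descD Cdep[unfolded U_def] Cpos qd qn x y])
  qed
  have finA: "finite (PiE Ba X)" using cf(1) cf(2) BaG finite_subset by (intro finite_PiE) auto
  have Csub: "fib X Ba (U \<inter> Ba) x \<subseteq> PiE Ba X" by (rule fib_sub)
  have Cne: "fib X Ba (U \<inter> Ba) x \<noteq> {}"
  proof -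
    have "restrict x Ba \<in> fib X Ba (U \<inter> Ba) x" unfolding fib_def using restrict_PiE_sub[OF x BaG] by auto
    then show ?thesis by blast
  qed
  have "(\<lambda>n. cp (rw (PiE Ba X) Qa (e n)) {u \<in> PiE Ba X. u s = y} (fib X Ba (U \<inter> Ba) x))
      \<longlonglongrightarrow> Qa {u \<in> PiE Ba X. u s = y} (fib X Ba (U \<inter> Ba) x)"
    by (rule rw_approx[OF fca finA _ Csub Cne e]) auto
  then show ?thesis unfolding U_def[symmetric] eqn .
qed



lemma dnode_case:
  fixes w g1 g2 :: "('n \<Rightarrow> 'v) \<Rightarrow> real" and q :: "'n \<Rightarrow> ('n \<Rightarrow> 'v) \<Rightarrow> real"
  assumes cn: "credal_network G par X M"
    and ac1: "ac G par B1" and ac2: "ac G par B2"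
    and Dset: "Dset = G - B1 - B2"
    and wdef: "\<And>z. w z = g1 (restrict z B1) * g2 (restrict z B2) * (\<Prod>d\<in>Dset. q d z)"
    and g1pos: "\<And>v. v \<in> PiE B1 X \<Longrightarrow> 0 < g1 v" and g2pos: "\<And>v. v \<in> PiE B2 X \<Longrightarrow> 0 < g2 v"
    and qdep: "\<And>d. d \<in> Dset \<Longrightarrow> dep (q d) (insert d (par d))"
    and qnorm: "\<And>d z. d \<in> Dset \<Longrightarrow> z \<in> PiE G X \<Longrightarrow> (\<Sum>y\<in>X d. q d (z(d := y))) = 1"
    and qpos: "\<And>d z. d \<in> Dset \<Longrightarrow> z \<in> PiE G X \<Longrightarrow> 0 < q d z"
    and s: "s \<in> Dset" and x: "x \<in> PiE G X" and y: "y \<in> X s"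
  shows "cp w {z \<in> PiE G X. z s = y} (fib X G (nondesc G par s) x) = q s (x(s := y))"
proof -
  note cf = cn_facts[OF cn]
  define U where "U = nondesc G par s"
  define T where "T = desc G par s"
  have B1G: "B1 \<subseteq> G" and B2G: "B2 \<subseteq> G" using ac1 ac2 unfolding ac_def by auto
  have sG: "s \<in> G" using s Dset by auto
  have DG: "Dset \<subseteq> G" using Dset by auto
  have sB1: "s \<notin> B1" and sB2: "s \<notin> B2" using s Dset by auto
  have B1U: "B1 \<subseteq> U" unfolding U_def by (rule ac_in_nondesc[OF ac1 sB1])
  have B2U: "B2 \<subseteq> U" unfolding U_def by (rule ac_in_nondesc[OF ac2 sB2])
  have TD: "T \<subseteq> Dset"
    using ac_disj_desc[OF ac1 sB1] ac_disj_desc[OF ac2 sB2] desc_G[of G par s] Dset unfolding T_def by blast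
  note spl = nondesc_split[OF sG, of par, folded U_def T_def]
  have sT: "s \<notin> T" unfolding T_def by (rule not_desc_self[OF cf(4)])
  have finD: "finite Dset" using DG cf(1) finite_subset by auto
  have Dsplit: "Dset - {s} = (Dset \<inter> U) \<union> T" using spl TD sT DG by blast
  have Ddisj: "(Dset \<inter> U) \<inter> T = {}" using spl by blast
  define C where "C z = g1 (restrict z B1) * g2 (restrict z B2) * (\<Prod>d\<in>Dset \<inter> U. q d z)" for z
  have weq: "w = (\<lambda>z. C z * q s z * (\<Prod>d\<in>desc G par s. q d z))"
  proof
    fix z
    have "(\<Prod>d\<in>Dset. q d z) = q s z * (\<Prod>d\<in>Dset - {s}. q d z)" using finD s by (simp add: prod.remove)
    also have "(\<Prod>d\<in>Dset - {s}. q d z) = (\<Prod>d\<in>Dset \<inter> U. q d z) * (\<Prod>d\<in>T. q d z)"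
      unfolding Dsplit by (rule prod.union_disjoint) (use finD TD Ddisj in \<open>auto intro: finite_subset\<close>)
    finally show "w z = C z * q s z * (\<Prod>d\<in>desc G par s. q d z)"
      unfolding wdef C_def T_def[symmetric] by (simp add: ac_simps)
  qed
  have Cdep: "dep C U"
    unfolding C_def
    by (rule dep_mult[OF dep_mult[OF dep_restrict[OF B1U] dep_restrict[OF B2U]]])
      (unfold U_def, rule dep_prod_nondesc[OF qdep cf(5) DG])
  have Cpos: "0 < C x"
  proof -
    have "0 < g1 (restrict x B1)" using g1pos restrict_PiE_sub[OF x B1G] by blast
    moreover have "0 < g2 (restrict x B2)" using g2pos restrict_PiE_sub[OF x B2G] by blast
    moreover have "0 < (\<Prod>d\<in>Dset \<inter> U. q d x)" using qpos[OF _ x] by (intro prod_pos) auto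
    ultimately show ?thesis unfolding C_def by simp
  qed
  have qd: "dep (q d) (insert d (par d))" if "d \<in> insert s (desc G par s)" for d
    using qdep that TD s unfolding T_def by blast
  have qn: "(\<Sum>y\<in>X d. q d (z(d := y))) = 1" if "d \<in> insert s (desc G par s)" "z \<in> PiE G X" for d z
    using qnorm that TD s unfolding T_def by blast
  show ?thesis unfolding weq
    by (rule dnode_lemma[OF cf(1) cf(2) cf(4) sG cf(5)[OF sG] Cdep[unfolded U_def] Cpos qd qn x y])
qed

lemma expect_case:
  fixes w g1 g2 F :: "('n \<Rightarrow> 'v) \<Rightarrow> real" and q :: "'n \<Rightarrow> ('n \<Rightarrow> 'v) \<Rightarrow> real"
  assumes cn: "credal_network G par X M"
    and B: "B1 \<subseteq> G" "B2 \<subseteq> G" "B1 \<inter> B2 = {}"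
    and Dset: "Dset = G - B1 - B2"
    and wdef: "\<And>z. w z = g1 (restrict z B1) * g2 (restrict z B2) * (\<Prod>d\<in>Dset. q d z)"
    and g1pos: "\<And>v. v \<in> PiE B1 X \<Longrightarrow> 0 < g1 v" and g2pos: "\<And>v. v \<in> PiE B2 X \<Longrightarrow> 0 < g2 v"
    and qdep: "\<And>d. d \<in> Dset \<Longrightarrow> dep (q d) (insert d (par d))"
    and qnorm: "\<And>d z. d \<in> Dset \<Longrightarrow> z \<in> PiE G X \<Longrightarrow> (\<Sum>y\<in>X d. q d (z(d := y))) = 1"
  shows "(\<Sum>z\<in>PiE G X. F (restrict z B1) * cp w {z} (PiE G X)) = (\<Sum>u\<in>PiE B1 X. F u * cp g1 {u} (PiE B1 X))"
proof -
  note cf = cn_facts[OF cn]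
  have DG: "Dset \<subseteq> G" and GD: "G - Dset = B1 \<union> B2" using Dset B by auto
  have "PiE G X \<noteq> {}" using cf(3) by (simp add: PiE_eq_empty_iff)
  then obtain x0 where x0: "x0 \<in> PiE G X" by blast
  have fin1: "finite (PiE B1 X)" using cf(1) cf(2) B(1) finite_subset by (intro finite_PiE) auto
  have fin2: "finite (PiE B2 X)" using cf(1) cf(2) B(2) finite_subset by (intro finite_PiE) auto
  have ne1: "PiE B1 X \<noteq> {}" using cf(3) B(1) by (auto simp: PiE_eq_empty_iff)
  have ne2: "PiE B2 X \<noteq> {}" using cf(3) B(2) by (auto simp: PiE_eq_empty_iff)
  define Z1 where "Z1 = (\<Sum>u\<in>PiE B1 X. g1 u)"
  define Z2 where "Z2 = (\<Sum>u\<in>PiE B2 X. g2 u)"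
  have Z1: "0 < Z1" unfolding Z1_def using fin1 ne1 g1pos by (intro sum_pos) auto
  have Z2: "0 < Z2" unfolding Z2_def using fin2 ne2 g2pos by (intro sum_pos) auto
  have EL: "(\<Sum>z\<in>PiE G X. H (restrict z B1) * w z) = Z2 * (\<Sum>u\<in>PiE B1 X. H u * g1 u)" for H
    unfolding wdef Z2_def
    by (rule expect_lemma[OF cf(1) cf(2) cf(4) B DG GD qdep qnorm x0])
  have W: "(\<Sum>z\<in>PiE G X. w z) = Z2 * Z1"
    using EL[of "\<lambda>_. 1"] unfolding Z1_def by simp
  have "(\<Sum>z\<in>PiE G X. F (restrict z B1) * cp w {z} (PiE G X)) = (\<Sum>z\<in>PiE G X. F (restrict z B1) * w z) / (Z2 * Z1)"
    unfolding cp_def W[symmetric] sum_divide_distrib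
    by (rule sum.cong[OF refl]) simp
  also have "\<dots> = (\<Sum>u\<in>PiE B1 X. F u * g1 u) / Z1" unfolding EL using Z2 by simp
  also have "\<dots> = (\<Sum>u\<in>PiE B1 X. F u * cp g1 {u} (PiE B1 X))"
    unfolding cp_def Z1_def[symmetric] sum_divide_distrib
    by (rule sum.cong[OF refl]) simp
  finally show ?thesis .
qed



lemma e_facts:
  shows "\<And>n. 0 < 1 / (real n + 2)" "\<And>n. 1 / (real n + 2) < 1" "(\<lambda>n. 1 / (real n + 2)) \<longlonglongrightarrow> 0"
proof -
  show "\<And>n. 0 < 1 / (real n + 2)" by simp
  show "\<And>n. 1 / (real n + 2) < 1" by simp
  have "(\<lambda>n. 1 / real (n + 2)) \<longlonglongrightarrow> 0"
    using LIMSEQ_ignore_initial_segment[OF lim_inverse_n', of 2] by simp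
  then show "(\<lambda>n. 1 / (real n + 2)) \<longlonglongrightarrow> 0" by (simp add: add.commute)
qed

lemma construction:
  fixes h f :: "('n \<Rightarrow> 'v) \<Rightarrow> real"
  assumes cn: "credal_network G par X M" and ac1: "ac G par B1" and ac2: "ac G par B2"
    and disj: "B1 \<inter> B2 = {}"
    and Q1: "Q1 \<in> irr_ext B1 par X M" and Q2: "Q2 \<in> irr_ext B2 par X M"
  shows "\<exists>P\<in>irr_ext G par X M. (\<Sum>z\<in>PiE G X. (h (restrict z B1) + f (restrict z B2)) * P {z} (PiE G X))
     = (\<Sum>u\<in>PiE B1 X. h u * Q1 {u} (PiE B1 X)) + (\<Sum>u\<in>PiE B2 X. f u * Q2 {u} (PiE B2 X))"
proof -
  note cf = cn_facts[OF cn]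
  have B1G: "B1 \<subseteq> G" and B2G: "B2 \<subseteq> G" using ac1 ac2 unfolding ac_def by auto
  have fc1: "full_cond_prob (PiE B1 X) Q1" using Q1 unfolding irr_ext_def by simp
  have fc2: "full_cond_prob (PiE B2 X) Q2" using Q2 unfolding irr_ext_def by simp
  have irr1: "\<And>s x. s \<in> B1 \<Longrightarrow> x \<in> PiE (nondesc B1 par s) X \<Longrightarrow>
     (\<lambda>y. Q1 {z\<in>PiE B1 X. z s = y} {z\<in>PiE B1 X. restrict z (nondesc B1 par s) = x}) \<in> M s (restrict x (par s))"
    using Q1 unfolding irr_ext_def by simp
  have irr2: "\<And>s x. s \<in> B2 \<Longrightarrow> x \<in> PiE (nondesc B2 par s) X \<Longrightarrow>
     (\<lambda>y. Q2 {z\<in>PiE B2 X. z s = y} {z\<in>PiE B2 X. restrict z (nondesc B2 par s) = x}) \<in> M s (restrict x (par s))"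
    using Q2 unfolding irr_ext_def by simp
  define \<Omega> where "\<Omega> = PiE G X"
  have fin\<Omega>: "finite \<Omega>" unfolding \<Omega>_def using cf(1) cf(2) by (intro finite_PiE) auto
  have fin1: "finite (PiE B1 X)" using cf(1) cf(2) B1G finite_subset by (intro finite_PiE) auto
  have fin2: "finite (PiE B2 X)" using cf(1) cf(2) B2G finite_subset by (intro finite_PiE) auto
  define Dset where "Dset = G - B1 - B2"
  have DG: "Dset \<subseteq> G" unfolding Dset_def by auto
  define psel where "psel d c = (SOME p. p \<in> M d c)" for d c
  have psel: "psel d c \<in> M d c \<and> is_pmf_on (X d) (psel d c)" if "d \<in> G" "c \<in> PiE (par d) X" for d c
  proof -
    have "M d c \<noteq> {}" "\<forall>p\<in>M d c. is_pmf_on (X d) p" using cn that unfolding credal_network_def by auto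
    then show ?thesis unfolding psel_def by (metis ex_in_conv someI_ex)
  qed
  define e where "e n = 1 / (real n + 2)" for n
  have e0: "\<And>n. 0 < e n" and e1: "\<And>n. e n < 1" and elim: "e \<longlonglongrightarrow> 0"
    unfolding e_def using e_facts by (auto simp: fun_eq_iff)
  define q where "q n d z = (1 - e n) * psel d (restrict z (par d)) (z d)
      + e n * (if z d \<in> X d then 1 / real (card (X d)) else 0)" for n d z
  have qdep: "dep (q n d) (insert d (par d))" for n d
    unfolding dep_def
  proof (intro allI impI)
    fix z z' :: "'n \<Rightarrow> 'v" assume h: "\<forall>i\<in>insert d (par d). z i = z' i"
    then have "restrict z (par d) = restrict z' (par d)" by (auto simp: restrict_def fun_eq_iff)
    moreover have "z d = z' d" using h by simp
    ultimately show "q n d z = q n d z'" unfolding q_def by simp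
  qed
  have qnorm: "(\<Sum>y\<in>X d. q n d (z(d := y))) = 1" if d: "d \<in> G" and z: "z \<in> PiE G X" for n d z
  proof -
    have dp: "d \<notin> par d" by (rule not_par_self[OF cf(4) d])
    have rz: "restrict (z(d := y)) (par d) = restrict z (par d)" for y using dp by (auto simp: restrict_def fun_eq_iff)
    have cP: "restrict z (par d) \<in> PiE (par d) X" using z cf(5)[OF d] by (auto simp: PiE_iff)
    have pm: "is_pmf_on (X d) (psel d (restrict z (par d)))" using psel[OF d cP] by simp
    have s1: "(\<Sum>y\<in>X d. psel d (restrict z (par d)) y) = 1" using pm unfolding is_pmf_on_def by simp
    have cardpos: "0 < card (X d)" using cf(2)[OF d] cf(3)[OF d] by (simp add: card_gt_0_iff)
    have s2: "(\<Sum>y\<in>X d. (if y \<in> X d then 1 / real (card (X d)) else 0)) = 1" using cardpos by simp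
    have "(\<Sum>y\<in>X d. q n d (z(d := y)))
        = (1 - e n) * (\<Sum>y\<in>X d. psel d (restrict z (par d)) y) + e n * (\<Sum>y\<in>X d. (if y \<in> X d then 1 / real (card (X d)) else 0))"
      unfolding q_def rz by (simp add: sum.distrib sum_distrib_left)
    also have "\<dots> = 1" unfolding s1 s2 by simp
    finally show ?thesis .
  qed
  have qpos: "0 < q n d z" if d: "d \<in> G" and z: "z \<in> PiE G X" for n d z
  proof -
    have cP: "restrict z (par d) \<in> PiE (par d) X" using z cf(5)[OF d] by (auto simp: PiE_iff)
    have pm: "is_pmf_on (X d) (psel d (restrict z (par d)))" using psel[OF d cP] by simp
    have a: "0 \<le> (1 - e n) * psel d (restrict z (par d)) (z d)"
      using pm e1[of n] unfolding is_pmf_on_def by simp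
    have zd: "z d \<in> X d" using z d by (auto simp: PiE_iff)
    have cardpos: "0 < card (X d)" using cf(2)[OF d] cf(3)[OF d] by (simp add: card_gt_0_iff)
    have b: "0 < e n * (if z d \<in> X d then 1 / real (card (X d)) else 0)" using zd cardpos e0[of n] by simp
    show ?thesis unfolding q_def using a b by simp
  qed
  define r1 where "r1 n = rw (PiE B1 X) Q1 (e n)" for n
  define r2 where "r2 n = rw (PiE B2 X) Q2 (e n)" for n
  have r1pos: "0 < r1 n v" if "v \<in> PiE B1 X" for n v unfolding r1_def by (rule rw_pos[OF fc1 fin1 e0 that])
  have r2pos: "0 < r2 n v" if "v \<in> PiE B2 X" for n v unfolding r2_def by (rule rw_pos[OF fc2 fin2 e0 that])
  define w where "w n z = r1 n (restrict z B1) * r2 n (restrict z B2) * (\<Prod>d\<in>Dset. q n d z)" for n z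
  have wpos: "0 < w n z" if z: "z \<in> \<Omega>" for n z
  proof -
    have "0 < r1 n (restrict z B1)" using r1pos restrict_PiE_sub[OF z[unfolded \<Omega>_def] B1G] by blast
    moreover have "0 < r2 n (restrict z B2)" using r2pos restrict_PiE_sub[OF z[unfolded \<Omega>_def] B2G] by blast
    moreover have "0 < (\<Prod>d\<in>Dset. q n d z)" using qpos z DG unfolding \<Omega>_def by (intro prod_pos) auto
    ultimately show ?thesis unfolding w_def by simp
  qed
  have fcn: "full_cond_prob \<Omega> (cp (w n))" for n by (rule cp_fcp[OF fin\<Omega> wpos])
  have bnd: "\<bar>cp (w n) A B\<bar> \<le> 1" if "B \<subseteq> \<Omega>" for n A B
  proof -
    have fB: "finite B" using that fin\<Omega> finite_subset by auto
    have nn: "\<And>z. z \<in> B \<Longrightarrow> 0 \<le> w n z" using wpos that by (auto intro: less_imp_le)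
    show ?thesis using cp_bounds[OF fB nn, where A=A] by simp
  qed
  obtain \<sigma> where \<sigma>: "strict_mono \<sigma>"
    and conv: "\<forall>i\<in>Pow \<Omega> \<times> Pow \<Omega>. convergent (\<lambda>k. cp (w (\<sigma> k)) (fst i) (snd i))"
    using compact_subseq[of "Pow \<Omega> \<times> Pow \<Omega>" "\<lambda>n i. cp (w n) (fst i) (snd i)" 1] fin\<Omega> bnd by auto
  define P where "P A B = lim (\<lambda>k. cp (w (\<sigma> k)) A B)" for A B
  have Plim: "(\<lambda>k. cp (w (\<sigma> k)) A B) \<longlonglongrightarrow> P A B" if "A \<subseteq> \<Omega>" "B \<subseteq> \<Omega>" for A B
  proof -
    have "convergent (\<lambda>k. cp (w (\<sigma> k)) A B)" using conv that by force
    then show ?thesis unfolding P_def by (simp add: convergent_LIMSEQ_iff)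
  qed
  have Puniq: "P A B = L" if "A \<subseteq> \<Omega>" "B \<subseteq> \<Omega>" "(\<lambda>n. cp (w n) A B) \<longlonglongrightarrow> L" for A B L
  proof -
    have "(\<lambda>k. cp (w (\<sigma> k)) A B) \<longlonglongrightarrow> L" using LIMSEQ_subseq_LIMSEQ[OF that(3) \<sigma>] by (simp add: o_def)
    then show ?thesis using Plim[OF that(1,2)] LIMSEQ_unique by blast
  qed
  have fcP: "full_cond_prob \<Omega> P" by (rule fcp_limit[OF fcn Plim])
  have wdef1: "w n z = rw (PiE B1 X) Q1 (e n) (restrict z B1) * r2 n (restrict z B2) * (\<Prod>d\<in>Dset. q n d z)" for n z
    unfolding w_def r1_def by simp
  have wdef2: "w n z = rw (PiE B2 X) Q2 (e n) (restrict z B2) * r1 n (restrict z B1) * (\<Prod>d\<in>Dset. q n d z)" for n z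
    unfolding w_def r2_def by (simp add: ac_simps)
  have disj': "B2 \<inter> B1 = {}" using disj by auto
  have Dset': "Dset = G - B2 - B1" unfolding Dset_def by auto
  have qdepD: "\<And>n d. d \<in> Dset \<Longrightarrow> dep (q n d) (insert d (par d))" using qdep by blast
  have qnormD: "\<And>n d z. d \<in> Dset \<Longrightarrow> z \<in> PiE G X \<Longrightarrow> (\<Sum>y\<in>X d. q n d (z(d := y))) = 1"
    using qnorm DG by blast
  have qposD: "\<And>n d z. d \<in> Dset \<Longrightarrow> z \<in> PiE G X \<Longrightarrow> 0 < q n d z" using qpos DG by blast
  have irrP: "\<forall>s\<in>G. \<forall>xx\<in>PiE (nondesc G par s) X.
     (\<lambda>y. P {z\<in>PiE G X. z s = y} {z\<in>PiE G X. restrict z (nondesc G par s) = xx}) \<in> M s (restrict xx (par s))"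
  proof (intro ballI)
    fix s xx assume sG: "s \<in> G" and xx: "xx \<in> PiE (nondesc G par s) X"
    define U where "U = nondesc G par s"
    have UG: "U \<subseteq> G" unfolding U_def nondesc_def by auto
    have "\<exists>x\<in>PiE G X. restrict x U = xx" by (rule ext_exists[OF cf(3) UG xx[folded U_def]])
    then obtain x where x: "x \<in> PiE G X" and rx: "restrict x U = xx" by blast
    have xxi: "\<And>i. i \<in> U \<Longrightarrow> xx i = x i" using rx by auto
    have cond: "{z\<in>PiE G X. restrict z U = xx} = fib X G U x"
    proof -
      have "restrict z U = xx \<longleftrightarrow> (\<forall>i\<in>U. z i = x i)" for z
        using restrict_eq_iff[OF xx[folded U_def], of z] xxi by auto
      then show ?thesis unfolding fib_def by auto
    qed
    have fsub: "fib X G U x \<subseteq> \<Omega>" unfolding \<Omega>_def by (rule fib_sub)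
    have fne: "fib X G U x \<noteq> {}" using x unfolding fib_def by auto
    have Asub: "{z\<in>PiE G X. z s = y} \<subseteq> \<Omega>" for y unfolding \<Omega>_def by auto
    have Aempty: "{z\<in>PiE G X. z s = y} = {}" if "y \<notin> X s" for y using that sG by (auto simp: PiE_iff)
    have P0: "P {z\<in>PiE G X. z s = y} (fib X G U x) = 0" if "y \<notin> X s" for y
      unfolding Aempty[OF that] by (rule fcp_empty[OF fcP fsub fne])
    have parU: "par s \<subseteq> U" unfolding U_def by (rule par_nondesc[OF cf(4) sG cf(5)[OF sG]])
    have goal_eq: "(\<lambda>y. P {z\<in>PiE G X. z s = y} {z\<in>PiE G X. restrict z (nondesc G par s) = xx})
       = (\<lambda>y. P {z\<in>PiE G X. z s = y} (fib X G U x))" unfolding U_def[symmetric] cond ..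
    have blockcase: "(\<lambda>y. P {z\<in>PiE G X. z s = y} (fib X G U x)) \<in> M s (restrict xx (par s))"
      if acA: "ac G par Ba" and acB: "ac G par Bb" and dAB: "Ba \<inter> Bb = {}" and DAB: "Dset = G - Ba - Bb"
        and fcA: "full_cond_prob (PiE Ba X) Qa" and sA: "s \<in> Ba"
        and irrA: "\<And>x. x \<in> PiE (nondesc Ba par s) X \<Longrightarrow>
           (\<lambda>y. Qa {z\<in>PiE Ba X. z s = y} {z\<in>PiE Ba X. restrict z (nondesc Ba par s) = x}) \<in> M s (restrict x (par s))"
        and wd: "\<And>n z. w n z = rw (PiE Ba X) Qa (e n) (restrict z Ba) * g' n (restrict z Bb) * (\<Prod>d\<in>Dset. q n d z)"
        and gp: "\<And>n v. v \<in> PiE Bb X \<Longrightarrow> 0 < g' n v"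
      for Ba Bb Qa g'
    proof -
      have BaG: "Ba \<subseteq> G" using acA unfolding ac_def by auto
      define N1 where "N1 = nondesc Ba par s"
      have N1eq: "N1 = U \<inter> Ba" unfolding N1_def U_def by (rule nondesc_sub[OF acA sA])
      define xx1 where "xx1 = restrict xx N1"
      have xx1P: "xx1 \<in> PiE N1 X" unfolding xx1_def using xx N1eq U_def by (auto simp: PiE_iff)
      have fibeq: "fib X Ba (U \<inter> Ba) x = {u\<in>PiE Ba X. restrict u N1 = xx1}"
      proof -
        have "restrict u N1 = xx1 \<longleftrightarrow> (\<forall>i\<in>U \<inter> Ba. u i = x i)" for u
          using restrict_eq_iff[OF xx1P, of u] xxi unfolding xx1_def N1eq by auto
        then show ?thesis unfolding fib_def by auto
      qed
      define t where "t y = Qa {u\<in>PiE Ba X. u s = y} {u\<in>PiE Ba X. restrict u N1 = xx1}" for y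
      have tM: "t \<in> M s (restrict xx1 (par s))" unfolding t_def N1_def using irrA[OF xx1P[unfolded N1_def]] .
      have parN1: "par s \<subseteq> N1" using parU acA sA unfolding N1eq ac_def by auto
      have rpar: "restrict xx1 (par s) = restrict xx (par s)" unfolding xx1_def using parN1
        by (simp add: Int_absorb1)
      have eqt: "P {z\<in>PiE G X. z s = y} (fib X G U x) = t y" for y
      proof (cases "y \<in> X s")
        case True
        have "(\<lambda>n. cp (w n) {z\<in>PiE G X. z s = y} (fib X G (nondesc G par s) x))
           \<longlonglongrightarrow> Qa {u\<in>PiE Ba X. u s = y} (fib X Ba (nondesc G par s \<inter> Ba) x)"
          by (rule block_case[OF cn acA acB dAB DAB fcA e0 elim wd gp qdepD qnormD qposD sA x True])
        then show ?thesis unfolding t_def U_def[symmetric] fibeq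
          by (rule Puniq[OF Asub fsub[unfolded U_def], folded U_def])
      next
        case False
        have e1: "{u\<in>PiE Ba X. u s = y} = {}" using False sA by (auto simp: PiE_iff)
        have ne: "{u\<in>PiE Ba X. restrict u N1 = xx1} \<noteq> {}" using fibeq[symmetric] x BaG
          unfolding fib_def by (auto intro!: exI[of _ "restrict x Ba"] simp: PiE_iff)
        have "t y = 0" unfolding t_def e1 by (rule fcp_empty[OF fcA _ ne]) auto
        then show ?thesis using P0[OF False] by simp
      qed
      have "(\<lambda>y. P {z\<in>PiE G X. z s = y} (fib X G U x)) = t" using eqt by auto
      then show ?thesis using tM rpar by simp
    qed
    show "(\<lambda>y. P {z\<in>PiE G X. z s = y} {z\<in>PiE G X. restrict z (nondesc G par s) = xx}) \<in> M s (restrict xx (par s))"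
      unfolding goal_eq
    proof -
      consider "s \<in> B1" | "s \<in> B2" | "s \<in> Dset" using sG unfolding Dset_def by blast
      then show "(\<lambda>y. P {z\<in>PiE G X. z s = y} (fib X G U x)) \<in> M s (restrict xx (par s))"
      proof cases
        case 1
        show ?thesis by (rule blockcase[OF ac1 ac2 disj Dset_def fc1 1 irr1[OF 1] wdef1 r2pos])
      next
        case 2
        show ?thesis by (rule blockcase[OF ac2 ac1 disj' Dset' fc2 2 irr2[OF 2] wdef2 r1pos])
      next
        case 3
        define t where "t = psel s (restrict xx (par s))"
        have cP: "restrict xx (par s) \<in> PiE (par s) X" using xx parU unfolding U_def by (auto simp: PiE_iff)
        have tM: "t \<in> M s (restrict xx (par s))" and tp: "is_pmf_on (X s) t"
          unfolding t_def using psel[OF sG cP] by auto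
        have rpar: "restrict x (par s) = restrict xx (par s)"
          unfolding rx[symmetric] using parU by (simp add: Int_absorb1)
        have sp: "s \<notin> par s" by (rule not_par_self[OF cf(4) sG])
        have eqt: "P {z\<in>PiE G X. z s = y} (fib X G U x) = t y" for y
        proof (cases "y \<in> X s")
          case True
          have qeq: "q n s (x(s := y)) = (1 - e n) * t y + e n * (1 / real (card (X s)))" for n
          proof -
            have "restrict (x(s := y)) (par s) = restrict x (par s)" using sp by (auto simp: restrict_def fun_eq_iff)
            then show ?thesis unfolding q_def t_def rpar[symmetric] using True by simp
          qed
          have cpeq: "cp (w n) {z\<in>PiE G X. z s = y} (fib X G U x) = q n s (x(s := y))" for n
          proof -
            have wd0: "\<And>z. w n z = r1 n (restrict z B1) * r2 n (restrict z B2) * (\<Prod>d\<in>Dset. q n d z)"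
              unfolding w_def ..
            show ?thesis unfolding U_def
              by (rule dnode_case[OF cn ac1 ac2 Dset_def wd0 r1pos r2pos qdepD[where n=n] qnormD[where n=n] qposD[where n=n] 3 x True])
          qed
          have "(\<lambda>n. (1 - e n) * t y + e n * (1 / real (card (X s)))) \<longlonglongrightarrow> (1 - 0) * t y + 0 * (1 / real (card (X s)))"
            by (intro tendsto_intros elim)
          then have "(\<lambda>n. cp (w n) {z\<in>PiE G X. z s = y} (fib X G U x)) \<longlonglongrightarrow> t y"
            unfolding cpeq qeq by simp
          then show ?thesis by (rule Puniq[OF Asub fsub])
        next
          case False
          then have "t y = 0" using tp unfolding is_pmf_on_def by simp
          then show ?thesis using P0[OF False] by simp
        qed
        have "(\<lambda>y. P {z\<in>PiE G X. z s = y} (fib X G U x)) = t" using eqt by auto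
        then show ?thesis using tM by simp
      qed
    qed
  qed
  have PinG: "P \<in> irr_ext G par X M" unfolding irr_ext_def using fcP[unfolded \<Omega>_def] irrP by simp
  have wd0: "\<And>z. w n z = r1 n (restrict z B1) * r2 n (restrict z B2) * (\<Prod>d\<in>Dset. q n d z)" for n
    unfolding w_def ..
  have wd0': "\<And>z. w n z = r2 n (restrict z B2) * r1 n (restrict z B1) * (\<Prod>d\<in>Dset. q n d z)" for n
    unfolding w_def by (simp add: ac_simps)
  have EVn: "(\<Sum>z\<in>\<Omega>. (h (restrict z B1) + f (restrict z B2)) * cp (w n) {z} \<Omega>)
      = (\<Sum>u\<in>PiE B1 X. h u * cp (r1 n) {u} (PiE B1 X)) + (\<Sum>u\<in>PiE B2 X. f u * cp (r2 n) {u} (PiE B2 X))" for n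
  proof -
    have "(\<Sum>z\<in>\<Omega>. (h (restrict z B1) + f (restrict z B2)) * cp (w n) {z} \<Omega>)
        = (\<Sum>z\<in>\<Omega>. h (restrict z B1) * cp (w n) {z} \<Omega>) + (\<Sum>z\<in>\<Omega>. f (restrict z B2) * cp (w n) {z} \<Omega>)"
      by (simp add: distrib_right sum.distrib)
    also have "(\<Sum>z\<in>\<Omega>. h (restrict z B1) * cp (w n) {z} \<Omega>) = (\<Sum>u\<in>PiE B1 X. h u * cp (r1 n) {u} (PiE B1 X))"
      unfolding \<Omega>_def
      by (rule expect_case[OF cn B1G B2G disj Dset_def wd0 r1pos r2pos qdepD[where n=n] qnormD[where n=n]])
    also have "(\<Sum>z\<in>\<Omega>. f (restrict z B2) * cp (w n) {z} \<Omega>) = (\<Sum>u\<in>PiE B2 X. f u * cp (r2 n) {u} (PiE B2 X))"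
      unfolding \<Omega>_def
      by (rule expect_case[OF cn B2G B1G disj' Dset' wd0' r2pos r1pos qdepD[where n=n] qnormD[where n=n]])
    finally show ?thesis .
  qed
  have ne1: "PiE B1 X \<noteq> {}" using cf(3) B1G by (auto simp: PiE_eq_empty_iff)
  have ne2: "PiE B2 X \<noteq> {}" using cf(3) B2G by (auto simp: PiE_eq_empty_iff)
  have lim1: "(\<lambda>n. \<Sum>u\<in>PiE B1 X. h u * cp (r1 n) {u} (PiE B1 X)) \<longlonglongrightarrow> (\<Sum>u\<in>PiE B1 X. h u * Q1 {u} (PiE B1 X))"
  proof (intro tendsto_sum tendsto_mult_left)
    fix u assume u: "u \<in> PiE B1 X"
    show "(\<lambda>n. cp (r1 n) {u} (PiE B1 X)) \<longlonglongrightarrow> Q1 {u} (PiE B1 X)"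
      unfolding r1_def by (rule rw_approx[OF fc1 fin1 _ order_refl ne1 e0 elim]) (use u in auto)
  qed
  have lim2: "(\<lambda>n. \<Sum>u\<in>PiE B2 X. f u * cp (r2 n) {u} (PiE B2 X)) \<longlonglongrightarrow> (\<Sum>u\<in>PiE B2 X. f u * Q2 {u} (PiE B2 X))"
  proof (intro tendsto_sum tendsto_mult_left)
    fix u assume u: "u \<in> PiE B2 X"
    show "(\<lambda>n. cp (r2 n) {u} (PiE B2 X)) \<longlonglongrightarrow> Q2 {u} (PiE B2 X)"
      unfolding r2_def by (rule rw_approx[OF fc2 fin2 _ order_refl ne2 e0 elim]) (use u in auto)
  qed
  have limE: "(\<lambda>n. \<Sum>z\<in>\<Omega>. (h (restrict z B1) + f (restrict z B2)) * cp (w n) {z} \<Omega>)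
      \<longlonglongrightarrow> (\<Sum>u\<in>PiE B1 X. h u * Q1 {u} (PiE B1 X)) + (\<Sum>u\<in>PiE B2 X. f u * Q2 {u} (PiE B2 X))"
    unfolding EVn by (rule tendsto_add[OF lim1 lim2])
  then have limEs: "(\<lambda>k. \<Sum>z\<in>\<Omega>. (h (restrict z B1) + f (restrict z B2)) * cp (w (\<sigma> k)) {z} \<Omega>)
      \<longlonglongrightarrow> (\<Sum>u\<in>PiE B1 X. h u * Q1 {u} (PiE B1 X)) + (\<Sum>u\<in>PiE B2 X. f u * Q2 {u} (PiE B2 X))"
    using LIMSEQ_subseq_LIMSEQ[OF _ \<sigma>] by (auto simp: o_def)
  have limP: "(\<lambda>k. \<Sum>z\<in>\<Omega>. (h (restrict z B1) + f (restrict z B2)) * cp (w (\<sigma> k)) {z} \<Omega>)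
      \<longlonglongrightarrow> (\<Sum>z\<in>\<Omega>. (h (restrict z B1) + f (restrict z B2)) * P {z} \<Omega>)"
  proof (intro tendsto_sum tendsto_mult_left)
    fix z assume "z \<in> \<Omega>"
    then show "(\<lambda>k. cp (w (\<sigma> k)) {z} \<Omega>) \<longlonglongrightarrow> P {z} \<Omega>" by (intro Plim) auto
  qed
  have "(\<Sum>z\<in>\<Omega>. (h (restrict z B1) + f (restrict z B2)) * P {z} \<Omega>)
      = (\<Sum>u\<in>PiE B1 X. h u * Q1 {u} (PiE B1 X)) + (\<Sum>u\<in>PiE B2 X. f u * Q2 {u} (PiE B2 X))"
    using LIMSEQ_unique[OF limP limEs] .
  then show ?thesis using PinG unfolding \<Omega>_def by blast
qed



lemma bdd_irr:
  assumes fin: "finite (PiE S X)"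
  shows "bdd_below ((\<lambda>P. \<Sum>z\<in>PiE S X. g z * P {z} (PiE S X)) ` irr_ext S par X M)"
proof (rule bdd_belowI2)
  fix P assume P: "P \<in> irr_ext S par X M"
  then have fc: "full_cond_prob (PiE S X) P" unfolding irr_ext_def by simp
  have "(\<Sum>z\<in>PiE S X. - \<bar>g z\<bar>) \<le> (\<Sum>z\<in>PiE S X. g z * P {z} (PiE S X))"
  proof (rule sum_mono)
    fix z assume z: "z \<in> PiE S X"
    have ne: "PiE S X \<noteq> {}" using z by auto
    have a: "0 \<le> P {z} (PiE S X)" using fcp_basic(1)[OF fc order_refl ne] z by auto
    have b: "P {z} (PiE S X) \<le> 1" using fcp_le1[OF fc order_refl ne] z by auto
    have "\<bar>g z * P {z} (PiE S X)\<bar> \<le> \<bar>g z\<bar>" using a b by (simp add: abs_mult mult_left_le)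
    then show "- \<bar>g z\<bar> \<le> g z * P {z} (PiE S X)" by linarith
  qed
  then show "- (\<Sum>z\<in>PiE S X. \<bar>g z\<bar>) \<le> (\<Sum>z\<in>PiE S X. g z * P {z} (PiE S X))"
    by (simp add: sum_negf)
qed

lemma irr_empty_ne: "irr_ext {} par X M \<noteq> {}"
proof -
  have "full_cond_prob (PiE {} X) (cp (\<lambda>_. 1))" by (rule cp_fcp) auto
  then have "cp (\<lambda>_. 1) \<in> irr_ext {} par X M" unfolding irr_ext_def by simp
  then show ?thesis by blast
qed

lemma ac_empty: "ac G par {}" unfolding ac_def by simp

theorem corollary2:
  fixes G :: "'n set" and par :: "'n \<Rightarrow> 'n set" and X :: "'n \<Rightarrow> 'v set"
    and M :: "'n \<Rightarrow> ('n \<Rightarrow> 'v) \<Rightarrow> ('v \<Rightarrow> real) set"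
    and K :: "'n set" and f h :: "('n \<Rightarrow> 'v) \<Rightarrow> real"
  assumes "credal_network G par X M"
    and "K \<subseteq> G" and "closed_set G par K" and "parents_set par K = {}"
  shows "lower_E_irr G par X M
           (\<lambda>z. h (restrict z (nondesc'_set G par K)) + f (restrict z K))
         = lower_E_irr (nondesc'_set G par K) par X M h + lower_E_irr K par X M f"
proof -
  note cn = assms(1)
  note cf = cn_facts[OF cn]
  define N where "N = nondesc'_set G par K"
  have Neq: "N = G - (K \<union> desc_set G par K)"
    unfolding N_def nondesc'_set_def nondesc_set_def assms(4) by simp
  have parK: "par s \<subseteq> K" if "s \<in> K" for s
    using assms(4) that unfolding parents_set_def by blast
  have acK: "ac G par K" unfolding ac_def using assms(2) parK by blast
  have acN: "ac G par N"
    unfolding ac_def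
  proof (intro conjI ballI)
    show "N \<subseteq> G" unfolding Neq by auto
    fix s assume s: "s \<in> N"
    show "par s \<subseteq> N"
    proof
      fix p assume p: "p \<in> par s"
      have sG: "s \<in> G" and sK: "s \<notin> K" and sD: "s \<notin> desc_set G par K" using s unfolding Neq by auto
      have pG: "p \<in> G" using cf(5)[OF sG] p by auto
      have e: "(p, s) \<in> edges G par" using p pG sG by (simp add: edges_iff)
      have "p \<notin> K"
      proof
        assume pK: "p \<in> K"
        have "s \<in> desc G par p" unfolding desc_def using e by auto
        then have "s \<in> desc_set G par K" unfolding desc_set_def using pK sK by auto
        then show False using sD by simp
      qed
      moreover have "p \<notin> desc_set G par K"
      proof
        assume "p \<in> desc_set G par K"
        then obtain k where k: "k \<in> K" "(k, p) \<in> (edges G par)\<^sup>+" unfolding desc_set_def desc_def by auto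
        then have "(k, s) \<in> (edges G par)\<^sup>+" using e by (meson trancl_into_trancl)
        then have "s \<in> desc_set G par K" unfolding desc_set_def desc_def using k sK by auto
        then show False using sD by simp
      qed
      ultimately show "p \<in> N" unfolding Neq using pG by auto
    qed
  qed
  have disj: "N \<inter> K = {}" unfolding Neq by auto
  have NG: "N \<subseteq> G" using acN unfolding ac_def by auto
  define VG where "VG P = (\<Sum>z\<in>PiE G X. (h (restrict z N) + f (restrict z K)) * P {z} (PiE G X))" for P
  define V1 where "V1 Q = (\<Sum>u\<in>PiE N X. h u * Q {u} (PiE N X))" for Q
  define V2 where "V2 Q = (\<Sum>u\<in>PiE K X. f u * Q {u} (PiE K X))" for Q
  have LG: "lower_E_irr G par X M (\<lambda>z. h (restrict z N) + f (restrict z K)) = Inf (VG ` irr_ext G par X M)"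
    unfolding lower_E_irr_def VG_def by simp
  have L1: "lower_E_irr N par X M h = Inf (V1 ` irr_ext N par X M)"
    unfolding lower_E_irr_def V1_def by simp
  have L2: "lower_E_irr K par X M f = Inf (V2 ` irr_ext K par X M)"
    unfolding lower_E_irr_def V2_def by simp
  have finG: "finite (PiE G X)" using cf(1) cf(2) by (intro finite_PiE) auto
  have finN: "finite (PiE N X)" using cf(1) cf(2) NG finite_subset by (intro finite_PiE) auto
  have finK: "finite (PiE K X)" using cf(1) cf(2) assms(2) finite_subset by (intro finite_PiE) auto
  have bG: "bdd_below (VG ` irr_ext G par X M)" unfolding VG_def by (rule bdd_irr[OF finG])
  have b1: "bdd_below (V1 ` irr_ext N par X M)" unfolding V1_def by (rule bdd_irr[OF finN])
  have b2: "bdd_below (V2 ` irr_ext K par X M)" unfolding V2_def by (rule bdd_irr[OF finK])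
  obtain P0 where P0: "P0 \<in> irr_ext G par X M"
  proof -
    obtain Q0 where "Q0 \<in> irr_ext {} par X M" using irr_empty_ne by blast
    from construction[OF cn ac_empty ac_empty _ this this, of "\<lambda>_. 0" "\<lambda>_. 0"]
    show ?thesis using that by blast
  qed
  have neG: "irr_ext G par X M \<noteq> {}" using P0 by blast
  have ne1: "irr_ext N par X M \<noteq> {}" using marg_irr[OF cn P0 acN] by blast
  have ne2: "irr_ext K par X M \<noteq> {}" using marg_irr[OF cn P0 acK] by blast
  have lower: "Inf (V1 ` irr_ext N par X M) + Inf (V2 ` irr_ext K par X M) \<le> Inf (VG ` irr_ext G par X M)"
  proof (rule cInf_greatest)
    show "VG ` irr_ext G par X M \<noteq> {}" using neG by blast
    fix v assume "v \<in> VG ` irr_ext G par X M"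
    then obtain P where P: "P \<in> irr_ext G par X M" and v: "v = VG P" by blast
    have fc: "full_cond_prob (PiE G X) P" using P unfolding irr_ext_def by simp
    have "VG P = (\<Sum>z\<in>PiE G X. h (restrict z N) * P {z} (PiE G X)) + (\<Sum>z\<in>PiE G X. f (restrict z K) * P {z} (PiE G X))"
      unfolding VG_def by (simp add: distrib_right sum.distrib)
    also have "(\<Sum>z\<in>PiE G X. h (restrict z N) * P {z} (PiE G X)) = V1 (marg X G P N)"
      unfolding V1_def by (rule marg_expect[OF fc cf(3) NG cf(1) cf(2)])
    also have "(\<Sum>z\<in>PiE G X. f (restrict z K) * P {z} (PiE G X)) = V2 (marg X G P K)"
      unfolding V2_def by (rule marg_expect[OF fc cf(3) assms(2) cf(1) cf(2)])
    finally have "VG P = V1 (marg X G P N) + V2 (marg X G P K)" .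
    moreover have "Inf (V1 ` irr_ext N par X M) \<le> V1 (marg X G P N)"
      using marg_irr[OF cn P acN] b1 by (intro cInf_lower) auto
    moreover have "Inf (V2 ` irr_ext K par X M) \<le> V2 (marg X G P K)"
      using marg_irr[OF cn P acK] b2 by (intro cInf_lower) auto
    ultimately show "Inf (V1 ` irr_ext N par X M) + Inf (V2 ` irr_ext K par X M) \<le> v" using v by simp
  qed
  have up0: "Inf (VG ` irr_ext G par X M) \<le> V1 Q1 + V2 Q2"
    if Q1: "Q1 \<in> irr_ext N par X M" and Q2: "Q2 \<in> irr_ext K par X M" for Q1 Q2
  proof -
    obtain P where P: "P \<in> irr_ext G par X M" and PV: "VG P = V1 Q1 + V2 Q2"
      using construction[OF cn acN acK disj Q1 Q2, of h f] unfolding VG_def V1_def V2_def by blast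
    have "Inf (VG ` irr_ext G par X M) \<le> VG P" using P bG by (intro cInf_lower) auto
    then show ?thesis using PV by simp
  qed
  have up1: "Inf (VG ` irr_ext G par X M) - V2 Q2 \<le> Inf (V1 ` irr_ext N par X M)"
    if Q2: "Q2 \<in> irr_ext K par X M" for Q2
  proof (rule cInf_greatest)
    show "V1 ` irr_ext N par X M \<noteq> {}" using ne1 by blast
    fix v assume "v \<in> V1 ` irr_ext N par X M"
    then obtain Q1 where "Q1 \<in> irr_ext N par X M" "v = V1 Q1" by blast
    then show "Inf (VG ` irr_ext G par X M) - V2 Q2 \<le> v" using up0[OF _ Q2] by force
  qed
  have up2: "Inf (VG ` irr_ext G par X M) - Inf (V1 ` irr_ext N par X M) \<le> Inf (V2 ` irr_ext K par X M)"
  proof (rule cInf_greatest)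
    show "V2 ` irr_ext K par X M \<noteq> {}" using ne2 by blast
    fix v assume "v \<in> V2 ` irr_ext K par X M"
    then obtain Q2 where "Q2 \<in> irr_ext K par X M" "v = V2 Q2" by blast
    then show "Inf (VG ` irr_ext G par X M) - Inf (V1 ` irr_ext N par X M) \<le> v" using up1 by force
  qed
  have "lower_E_irr G par X M (\<lambda>z. h (restrict z N) + f (restrict z K))
      = lower_E_irr N par X M h + lower_E_irr K par X M f"
    unfolding LG L1 L2 using lower up2 by linarith
  then show ?thesis unfolding N_def .
qed


end
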